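(* Let $N$ be a positive integer and let $\mathscr{W}(x,y)$ be a homogeneous rational function of degree $N$ which cannot be written as $\mathscr{V}^{m}(x,y)$ for a homogeneous rational function $\mathscr{V}$ and an integer $m\geq 2$. Let $\mathcal{U}(x,y)$ be the solution of the algebraic equation $$\mathscr{W}\Big(\mathcal{U}(x,y),\frac{y}{y+1}\Big)=\mathscr{W}(x,y)$$ satisfying the boundary condition $\lim_{z\to 0}\frac{\mathcal{U}(xz,yz)}{z}=x$. Then $\mathcal{U}(x,y)\bullet\frac{y}{y+1}$ is an algebraic projective flow of level $N$, with vector field $$\frac{Ny\mathscr{W}}{\mathscr{W}_{x}}-xy\ \bullet\ -y^{2}.$$
   Context: Notation: $a\bullet b$ denotes the pair $(a,b)$, $\mathbf{x}=(x,y)$. A (two-dimensional) projective flow is a pair $\phi(x,y)=u(x,y)\bullet v(x,y)$ satisfying $(1-z)\phi(\mathbf{x})=\phi\big(\phi(\mathbf{x}z)\frac{1-z}{z}\big)$ and $\lim_{z\to0}u(xz,yz)/z=x$, $\lim_{z\to0}v(xz,yz)/z=y$ (equivalently $\phi^{w}\circ\phi^{z}=\phi^{z+w}$ for small $z,w$, where $\phi^{z}(\mathbf x)=z^{-1}\phi(z\mathbf x)$, with branches chosen compatibly with the boundary conditions). Its vector field is $\varpi\bullet\varrho$ with $\varpi=\frac{d}{dz}\frac{u(xz,yz)}{z}|_{z=0}$, $\varrho=\frac{d}{dz}\frac{v(xz,yz)}{z}|_{z=0}$. The flow is algebraic if $u,v$ are algebraic functions. Level: if $x\varrho-y\varpi\neq0$,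 let $\mathscr{W}_1$ be a nonzero $1$-homogeneous solution of $\mathscr{W}_1\varrho+(\mathscr{W}_1)_{x}(y\varpi-x\varrho)=0$ (so the orbits are $\mathscr{W}_1=\mathrm{const}$); the flow is abelian of level $N$ if $N$ is the smallest positive integer such that $\mathscr{W}_1^{N}$ is rational. *)

theory Defs
  imports "HOL-Analysis.Analysis" "HOL-Computational_Algebra.Polynomial"
begin

text \<open>A bivariate polynomial is an element of complex poly poly: the outer
  variable is y, the coefficients are polynomials in x.\<close>

definition eval2 :: "complex poly poly \<Rightarrow> complex \<Rightarrow> complex \<Rightarrow> complex" where
  "eval2 p x y = poly (map_poly (\<lambda>c. poly c x) p) y"

definition eval3 :: "complex poly poly poly \<Rightarrow> complex \<Rightarrow> complex \<Rightarrow> complex \<Rightarrow> complex" where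
  "eval3 R x y t = poly (map_poly (\<lambda>c. eval2 c x y) R) t"

definition dx2 :: "complex poly poly \<Rightarrow> complex poly poly" where
  "dx2 p = map_poly pderiv p"

definition hom_poly2 :: "nat \<Rightarrow> complex poly poly \<Rightarrow> bool" where
  "hom_poly2 d p \<longleftrightarrow> (\<forall>i j. coeff (coeff p j) i \<noteq> 0 \<longrightarrow> i + j = d)"

definition hom_rat_fun :: "int \<Rightarrow> complex poly poly \<Rightarrow> complex poly poly \<Rightarrow> bool" where
  "hom_rat_fun N P Q \<longleftrightarrow> Q \<noteq> 0 \<and>
     (\<exists>a b. hom_poly2 a P \<and> hom_poly2 b Q \<and> int a - int b = N)"

definition is_hom_power :: "complex poly poly \<Rightarrow> complex poly poly \<Rightarrow> bool" where
  "is_hom_power P Q \<longleftrightarrow>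
     (\<exists>A B (m::nat) d. m \<ge> 2 \<and> hom_rat_fun d A B \<and> P * B ^ m = A ^ m * Q)"

definition ratW :: "complex poly poly \<Rightarrow> complex poly poly \<Rightarrow> complex \<Rightarrow> complex \<Rightarrow> complex" where
  "ratW P Q x y = eval2 P x y / eval2 Q x y"

definition ratWx :: "complex poly poly \<Rightarrow> complex poly poly \<Rightarrow> complex \<Rightarrow> complex \<Rightarrow> complex" where
  "ratWx P Q x y =
     (eval2 (dx2 P) x y * eval2 Q x y - eval2 P x y * eval2 (dx2 Q) x y) / (eval2 Q x y)^2"

definition rational_on :: "(complex \<times> complex) set \<Rightarrow> (complex \<Rightarrow> complex \<Rightarrow> complex) \<Rightarrow> bool" where
  "rational_on D f \<longleftrightarrow> (\<exists>A B. B \<noteq> 0 \<and>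
     (\<forall>(x,y)\<in>D. eval2 B x y \<noteq> 0 \<longrightarrow> f x y = eval2 A x y / eval2 B x y))"

definition algebraic_on :: "(complex \<times> complex) set \<Rightarrow> (complex \<Rightarrow> complex \<Rightarrow> complex) \<Rightarrow> bool" where
  "algebraic_on D f \<longleftrightarrow> (\<exists>R. R \<noteq> 0 \<and> (\<forall>(x,y)\<in>D. eval3 R x y (f x y) = 0))"

definition fpow :: "(complex \<Rightarrow> complex \<Rightarrow> complex) \<Rightarrow> (complex \<Rightarrow> complex \<Rightarrow> complex)
    \<Rightarrow> complex \<Rightarrow> complex \<times> complex \<Rightarrow> complex \<times> complex" where
  "fpow u v z p = (u (z * fst p) (z * snd p) / z, v (z * fst p) (z * snd p) / z)"

definition projective_flow_on ::
    "(complex \<times> complex) set \<Rightarrow> (complex \<Rightarrow> complex \<Rightarrow> complex) \<Rightarrow> (complex \<Rightarrow> complex \<Rightarrow> complex) \<Rightarrow> bool" where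
  "projective_flow_on D u v \<longleftrightarrow> open D \<and> D \<noteq> {} \<and>
     (\<forall>(x,y)\<in>D.
        ((\<lambda>z. u (z * x) (z * y) / z) \<longlongrightarrow> x) (at 0) \<and>
        ((\<lambda>z. v (z * x) (z * y) / z) \<longlongrightarrow> y) (at 0) \<and>
        eventually (\<lambda>(z, w). z \<noteq> 0 \<and> w \<noteq> 0 \<and> z + w \<noteq> 0 \<longrightarrow>
            fpow u v w (fpow u v z (x, y)) = fpow u v (z + w) (x, y)) (at (0, 0)))"

text \<open>Vector field: derivative at z = 0 of u(xz,yz)/z (extended by x at z = 0),
  i.e. the limit of the difference quotient.\<close>
definition vf1 :: "(complex \<Rightarrow> complex \<Rightarrow> complex) \<Rightarrow> complex \<Rightarrow> complex \<Rightarrow> complex" where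
  "vf1 u x y = Lim (at 0) (\<lambda>z. (u (z * x) (z * y) / z - x) / z)"

definition vf2 :: "(complex \<Rightarrow> complex \<Rightarrow> complex) \<Rightarrow> complex \<Rightarrow> complex \<Rightarrow> complex" where
  "vf2 v x y = Lim (at 0) (\<lambda>z. (v (z * x) (z * y) / z - y) / z)"

definition level_solution ::
    "(complex \<times> complex) set \<Rightarrow> (complex \<Rightarrow> complex \<Rightarrow> complex) \<Rightarrow> (complex \<Rightarrow> complex \<Rightarrow> complex)
      \<Rightarrow> (complex \<Rightarrow> complex \<Rightarrow> complex) \<Rightarrow> bool" where
  "level_solution D vp vr W1 \<longleftrightarrow>
     (\<forall>(x,y)\<in>D. W1 x y \<noteq> 0 \<and>
        (\<exists>d. ((\<lambda>t. W1 t y) has_field_derivative d) (at x) \<and>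
             W1 x y * vr x y + d * (y * vp x y - x * vr x y) = 0) \<and>
        (\<forall>\<^sub>F t in nhds 1. W1 (t * x) (t * y) = t * W1 x y))"

definition level_on ::
    "(complex \<times> complex) set \<Rightarrow> (complex \<Rightarrow> complex \<Rightarrow> complex) \<Rightarrow> (complex \<Rightarrow> complex \<Rightarrow> complex) \<Rightarrow> nat \<Rightarrow> bool" where
  "level_on D u v N \<longleftrightarrow> N > 0 \<and>
     (\<forall>(x,y)\<in>D. x * vf2 v x y - y * vf1 u x y \<noteq> 0) \<and>
     (\<exists>W1. level_solution D (vf1 u) (vf2 v) W1 \<and>
        rational_on D (\<lambda>x y. W1 x y ^ N) \<and>
        (\<forall>M. 0 < M \<and> M < N \<longrightarrow> \<not> rational_on D (\<lambda>x y. W1 x y ^ M)))"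

end

theory Submission
  imports Defs "HOL-Complex_Analysis.Complex_Analysis"
begin

lemma eval2_alt: "eval2 p x y = poly (poly p [:y:]) x"
  unfolding eval2_def
proof (induction p)
  case 0
  then show ?case by simp
next
  case (pCons a p)
  then show ?case by (simp add: map_poly_pCons)
qed

lemma eval2_add[simp]: "eval2 (p + q) x y = eval2 p x y + eval2 q x y"
  by (simp add: eval2_alt)
lemma eval2_diff[simp]: "eval2 (p - q) x y = eval2 p x y - eval2 q x y"
  by (simp add: eval2_alt)
lemma eval2_minus[simp]: "eval2 (- p) x y = - eval2 p x y"
  by (simp add: eval2_alt)
lemma eval2_mult[simp]: "eval2 (p * q) x y = eval2 p x y * eval2 q x y"
  by (simp add: eval2_alt)
lemma eval2_power[simp]: "eval2 (p ^ n) x y = eval2 p x y ^ n"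
  by (induction n) (simp_all add: eval2_alt)
lemma eval2_0[simp]: "eval2 0 x y = 0"
  by (simp add: eval2_alt)
lemma eval2_1[simp]: "eval2 1 x y = 1"
  by (simp add: eval2_alt)
lemma eval2_const[simp]: "eval2 [:[:c:]:] x y = c"
  by (simp add: eval2_alt)
lemma eval2_X[simp]: "eval2 [:[:0,1:]:] x y = x"
  by (simp add: eval2_alt)
lemma eval2_Y[simp]: "eval2 [:0,1:] x y = y"
  by (simp add: eval2_alt)
lemma eval2_smult[simp]: "eval2 (smult c q) x y = poly c x * eval2 q x y"
  by (simp add: eval2_alt)
lemma eval2_sum: "eval2 (sum f A) x y = (\<Sum>a\<in>A. eval2 (f a) x y)"
  by (induction A rule: infinite_finite_induct) simp_all

lemma eval3_alt: "eval3 R x y t = eval2 (poly R [:[:t:]:]) x y"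
  unfolding eval3_def
proof (induction R)
  case 0
  then show ?case by simp
next
  case (pCons a p)
  then show ?case by (simp add: map_poly_pCons)
qed

lemma eval3_add[simp]: "eval3 (p + q) x y t = eval3 p x y t + eval3 q x y t"
  by (simp add: eval3_alt)
lemma eval3_diff[simp]: "eval3 (p - q) x y t = eval3 p x y t - eval3 q x y t"
  by (simp add: eval3_alt)
lemma eval3_mult[simp]: "eval3 (p * q) x y t = eval3 p x y t * eval3 q x y t"
  by (simp add: eval3_alt)
lemma eval3_power[simp]: "eval3 (p ^ n) x y t = eval3 p x y t ^ n"
  by (induction n) (simp_all add: eval3_alt)
lemma eval3_lift[simp]: "eval3 [:p:] x y t = eval2 p x y"
  by (simp add: eval3_alt)
lemma eval3_T[simp]: "eval3 [:0,1:] x y t = t"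
  by (simp add: eval3_alt)
lemma eval3_1[simp]: "eval3 1 x y t = 1"
  by (simp add: eval3_alt)
lemma eval3_0[simp]: "eval3 0 x y t = 0"
  by (simp add: eval3_alt)
lemma eval3_sum: "eval3 (sum f A) x y t = (\<Sum>a\<in>A. eval3 (f a) x y t)"
  by (induction A rule: infinite_finite_induct) simp_all

lemma poly_sum_le: "degree (p::'a::comm_semiring_1 poly) \<le> n \<Longrightarrow> poly p x = (\<Sum>i\<le>n. coeff p i * x ^ i)"
proof -
  assume "degree p \<le> n"
  hence "(\<Sum>i\<le>n. coeff p i * x ^ i) = (\<Sum>i\<le>degree p. coeff p i * x ^ i)"
    by (intro sum.mono_neutral_right) (auto simp: coeff_eq_0)
  thus ?thesis by (simp add: poly_altdef[of p x])
qed

definition dg2 :: "complex poly poly \<Rightarrow> nat" where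
  "dg2 p = Max (insert 0 ((\<lambda>j. degree (coeff p j)) ` {..degree p}))"

lemma dg2_ge: "degree (coeff p j) \<le> dg2 p"
proof (cases "j \<le> degree p")
  case True
  then show ?thesis unfolding dg2_def by (intro Max_ge) auto
next
  case False
  then show ?thesis by (simp add: coeff_eq_0)
qed

lemma eval2_dsum: "eval2 p x y = (\<Sum>j\<le>degree p. \<Sum>i\<le>dg2 p. coeff (coeff p j) i * x ^ i * y ^ j)"
proof -
  have "eval2 p x y = poly (map_poly (\<lambda>c. poly c x) p) y" by (simp add: eval2_def)
  also have "\<dots> = (\<Sum>j\<le>degree p. poly (coeff p j) x * y ^ j)"
    by (subst poly_sum_le[of _ "degree p"]) (auto simp: map_poly_degree_leq coeff_map_poly)
  also have "\<dots> = (\<Sum>j\<le>degree p. \<Sum>i\<le>dg2 p. coeff (coeff p j) i * x ^ i * y ^ j)"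
    by (intro sum.cong refl, subst poly_sum_le[OF dg2_ge]) (simp add: sum_distrib_right)
  finally show ?thesis .
qed

lemma eval2_hom:
  assumes "hom_poly2 d p"
  shows "eval2 p (t * x) (t * y) = t ^ d * eval2 p x y"
proof -
  have "eval2 p (t * x) (t * y) = (\<Sum>j\<le>degree p. \<Sum>i\<le>dg2 p. t ^ d * (coeff (coeff p j) i * x ^ i * y ^ j))"
    unfolding eval2_dsum
  proof (intro sum.cong refl)
    fix j i
    show "coeff (coeff p j) i * (t * x) ^ i * (t * y) ^ j = t ^ d * (coeff (coeff p j) i * x ^ i * y ^ j)"
    proof (cases "coeff (coeff p j) i = 0")
      case False
      then have "i + j = d" using assms unfolding hom_poly2_def by blast
      then show ?thesis by (auto simp: power_mult_distrib power_add)
    qed simp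
  qed
  thus ?thesis by (simp add: eval2_dsum sum_distrib_left)
qed

lemma eval2_cont: "continuous_on UNIV (\<lambda>z. eval2 p (fst z) (snd z))"
  unfolding eval2_dsum by (intro continuous_intros)

lemma eval2_isCont: "isCont (\<lambda>z. eval2 p (fst z) (snd z)) z"
  using eval2_cont continuous_on_eq_continuous_at by blast

lemma eval2_deriv: "((\<lambda>s. eval2 p s y) has_field_derivative eval2 (dx2 p) x y) (at x)"
proof -
  have e1: "\<And>s. eval2 p s y = (\<Sum>j\<le>degree p. poly (coeff p j) s * y ^ j)"
    by (simp add: eval2_def, subst poly_sum_le[of _ "degree p"]) (auto simp: map_poly_degree_leq coeff_map_poly)
  have "eval2 (dx2 p) x y = (\<Sum>j\<le>degree p. poly (pderiv (coeff p j)) x * y ^ j)"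
    unfolding eval2_def dx2_def
    by (subst poly_sum_le[of _ "degree p"]) (auto simp: map_poly_degree_leq coeff_map_poly intro: order.trans[OF map_poly_degree_leq])
  then show ?thesis unfolding e1
    by (auto intro!: derivative_eq_intros DERIV_chain2[OF poly_DERIV])
qed

lemma ball_avoid_finite:
  fixes x0 :: complex
  assumes "r > 0" "finite F"
  obtains x where "x \<in> ball x0 r" "x \<notin> F"
proof -
  have "infinite (ball x0 r)"
  proof
    assume "finite (ball x0 r)"
    hence "ball x0 r = {}" using finite_imp_not_open by blast
    thus False using assms by auto
  qed
  hence "ball x0 r - F \<noteq> {}" using assms(2) by (metis Diff_infinite_finite finite.emptyI)
  thus ?thesis using that by blast
qed

lemma eval2_nonvanish:
  assumes "p \<noteq> 0" "open D" "(x0, y0) \<in> D"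
  shows "\<exists>x y. (x, y) \<in> D \<and> eval2 p x y \<noteq> 0"
proof -
  obtain e where e: "e > 0" "ball (x0, y0) e \<subseteq> D" using assms open_contains_ball by blast
  define c where "c = lead_coeff p"
  have c0: "c \<noteq> 0" using assms c_def by simp
  obtain x1 where x1: "x1 \<in> ball x0 (e/2)" "x1 \<notin> {x. poly c x = 0}"
    using ball_avoid_finite[of "e/2" "{x. poly c x = 0}" x0] poly_roots_finite[OF c0] e by auto
  define q where "q = map_poly (\<lambda>c. poly c x1) p"
  have "coeff q (degree p) = poly c x1" unfolding q_def c_def by (simp add: coeff_map_poly)
  hence q0: "q \<noteq> 0" using x1 by auto
  obtain y1 where y1: "y1 \<in> ball y0 (e/2)" "y1 \<notin> {y. poly q y = 0}"
    using ball_avoid_finite[of "e/2" "{y. poly q y = 0}" y0] poly_roots_finite[OF q0] e by auto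
  have "dist (x1, y1) (x0, y0) \<le> dist x1 x0 + dist y1 y0"
    unfolding dist_Pair_Pair by (rule sqrt_sum_squares_le_sum) auto
  also have "\<dots> < e" using x1 y1 by (simp add: dist_commute)
  finally have "(x1, y1) \<in> D" using e by (auto simp: dist_commute)
  moreover have "eval2 p x1 y1 \<noteq> 0" using y1 unfolding q_def eval2_def by simp
  ultimately show ?thesis by blast
qed

lemma eval2_eq_0_on_open:
  assumes "open D" "D \<noteq> {}" "\<forall>(x,y)\<in>D. eval2 p x y = 0"
  shows "p = 0"
  using eval2_nonvanish[of p D] assms by fastforce

lemma eval2_inj:
  assumes "\<And>x y. eval2 p x y = eval2 q x y"
  shows "p = q"
proof -
  have "p - q = 0" using eval2_eq_0_on_open[of UNIV "p - q"] assms by auto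
  thus ?thesis by simp
qed

lemma ratW_deriv:
  assumes "eval2 Q x y \<noteq> 0"
  shows "((\<lambda>s. ratW P Q s y) has_field_derivative ratWx P Q x y) (at x)"
proof -
  have "((\<lambda>s. eval2 P s y / eval2 Q s y) has_field_derivative
     (eval2 (dx2 P) x y * eval2 Q x y - eval2 P x y * eval2 (dx2 Q) x y) / (eval2 Q x y * eval2 Q x y)) (at x)"
    by (intro DERIV_divide eval2_deriv assms)
  thus ?thesis unfolding ratW_def ratWx_def by (simp add: power2_eq_square)
qed

lemma ratW_cont:
  assumes "eval2 Q (fst z) (snd z) \<noteq> 0"
  shows "isCont (\<lambda>z. ratW P Q (fst z) (snd z)) z"
  unfolding ratW_def using assms by (intro continuous_intros eval2_isCont)

lemma ratW_hom:
  assumes "hom_rat_fun (int N) P Q" "t \<noteq> 0"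
  shows "ratW P Q (t * x) (t * y) = t ^ N * ratW P Q x y"
proof -
  obtain a b where ab: "hom_poly2 a P" "hom_poly2 b Q" "int a - int b = int N"
    using assms unfolding hom_rat_fun_def by blast
  hence a: "a = b + N" by linarith
  show ?thesis unfolding ratW_def eval2_hom[OF ab(1)] eval2_hom[OF ab(2)] a
    using assms(2) by (simp add: power_add)
qed

lemma Q_hom:
  assumes "hom_rat_fun (int N) P Q"
  obtains b where "\<And>t x y. eval2 Q (t * x) (t * y) = t ^ b * eval2 Q x y"
  using assms eval2_hom unfolding hom_rat_fun_def by blast

lemma implicit_deriv_lim:
  fixes h :: "complex \<Rightarrow> complex"
  assumes hd: "(h has_field_derivative h') (at x)" and h'0: "h' \<noteq> 0"
    and sl: "(s \<longlongrightarrow> x) (at 0)" and ev: "eventually (\<lambda>z. h (s z) - h x = g z) (at 0)"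
    and gl: "((\<lambda>z. g z / z) \<longlongrightarrow> L) (at 0)"
  shows "((\<lambda>z. (s z - x) / z) \<longlongrightarrow> L / h') (at 0)"
proof -
  define e where "e v = (if v = x then h' else (h v - h x) / (v - x))" for v
  have "(e \<longlongrightarrow> h') (at x)"
  proof -
    have 1: "((\<lambda>v. (h v - h x) / (v - x)) \<longlongrightarrow> h') (at x)"
      using hd by (simp add: has_field_derivative_iff)
    have 2: "eventually (\<lambda>v. (h v - h x) / (v - x) = e v) (at x)"
      unfolding eventually_at_filter by (intro always_eventually) (simp add: e_def)
    show ?thesis using Lim_transform_eventually[OF 1 2] .
  qed
  moreover have "e x = h'" by (simp add: e_def)
  ultimately have "isCont e x" unfolding isCont_def by simp
  hence el: "((\<lambda>z. e (s z)) \<longlongrightarrow> h') (at 0)" using isCont_tendsto_compose[OF _ sl] \<open>e x = h'\<close> by metis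
  have hs: "h (s z) - h x = e (s z) * (s z - x)" for z by (cases "s z = x") (simp_all add: e_def)
  have "eventually (\<lambda>z. e (s z) \<noteq> 0) (at 0)" by (rule tendsto_imp_eventually_ne[OF el h'0])
  hence "eventually (\<lambda>z. (g z / z) / e (s z) = (s z - x) / z) (at 0)"
    using ev
  proof eventually_elim
    case (elim z)
    hence "g z = e (s z) * (s z - x)" using hs[of z] by simp
    thus ?case using elim by simp
  qed
  moreover have "((\<lambda>z. (g z / z) / e (s z)) \<longlongrightarrow> L / h') (at 0)"
    using gl el h'0 by (rule tendsto_divide)
  ultimately show ?thesis by (rule Lim_transform_eventually[rotated])
qed

lemma pow_quot_lim: "((\<lambda>z::complex. ((1 + z * y) ^ N - 1) / z) \<longlongrightarrow> of_nat N * y) (at 0)"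
proof -
  have "((\<lambda>z. (1 + z * y) ^ N) has_field_derivative of_nat N * (1 + 0 * y) ^ (N - 1) * y) (at 0)"
    by (rule derivative_eq_intros refl | simp)+
  thus ?thesis by (simp add: has_field_derivative_iff)
qed

lemma eval2_isCont1: "isCont (\<lambda>v. eval2 p v y) x"
  unfolding eval2_dsum by (intro continuous_intros)

lemma eval2_tendsto1: "(f \<longlongrightarrow> x) F \<Longrightarrow> ((\<lambda>z. eval2 p (f z) y) \<longlongrightarrow> eval2 p x y) F"
  using isCont_tendsto_compose[OF eval2_isCont1] by blast

lemma ev_norm_less: "r > 0 \<Longrightarrow> eventually (\<lambda>z::complex. norm z < r) (at 0)"
  unfolding eventually_at by (auto intro!: exI[of _ r])

locale prop3 =
  fixes N :: nat and P Q :: "complex poly poly"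
    and U :: "complex \<Rightarrow> complex \<Rightarrow> complex"
    and S D0 :: "(complex \<times> complex) set"
  assumes N_pos: "N > 0"
    and W_hom: "hom_rat_fun (int N) P Q"
    and W_not_power: "\<not> is_hom_power P Q"
    and S_open: "open S"
    and U_cont: "continuous_on S (\<lambda>(x, y). U x y)"
    and U_eq: "\<forall>(x, y)\<in>S. y + 1 \<noteq> 0 \<and> eval2 Q x y \<noteq> 0 \<and> eval2 Q (U x y) (y / (y + 1)) \<noteq> 0
                 \<longrightarrow> ratW P Q (U x y) (y / (y + 1)) = ratW P Q x y"
    and D0_open: "open D0" and D0_ne: "D0 \<noteq> {}"
    and cone: "\<exists>r>0. \<forall>(x, y)\<in>D0. \<forall>z. z \<noteq> 0 \<and> norm z < r \<longrightarrow> (z * x, z * y) \<in> S"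
    and U_bdry: "\<forall>(x, y)\<in>D0. ((\<lambda>z. U (z * x) (z * y) / z) \<longlongrightarrow> x) (at 0)"
begin

definition rc where "rc = (SOME r. r > 0 \<and> (\<forall>(x, y)\<in>D0. \<forall>z. z \<noteq> 0 \<and> norm z < r \<longrightarrow> (z * x, z * y) \<in> S))"

lemma rc: "rc > 0" "\<And>x y z. (x, y) \<in> D0 \<Longrightarrow> z \<noteq> 0 \<Longrightarrow> norm z < rc \<Longrightarrow> (z * x, z * y) \<in> S"
proof -
  have "rc > 0 \<and> (\<forall>(x, y)\<in>D0. \<forall>z. z \<noteq> 0 \<and> norm z < rc \<longrightarrow> (z * x, z * y) \<in> S)"
    unfolding rc_def using cone by (rule someI_ex)
  thus "rc > 0" "\<And>x y z. (x, y) \<in> D0 \<Longrightarrow> z \<noteq> 0 \<Longrightarrow> norm z < rc \<Longrightarrow> (z * x, z * y) \<in> S" by auto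
qed

definition bQ where "bQ = (SOME b. \<forall>t x y. eval2 Q (t * x) (t * y) = t ^ b * eval2 Q x y)"

lemma Qh: "eval2 Q (t * x) (t * y) = t ^ bQ * eval2 Q x y"
proof -
  have "\<exists>b. \<forall>t x y. eval2 Q (t * x) (t * y) = t ^ b * eval2 Q x y"
    using Q_hom[OF W_hom] by metis
  hence "\<forall>t x y. eval2 Q (t * x) (t * y) = t ^ bQ * eval2 Q x y" unfolding bQ_def by (rule someI_ex)
  thus ?thesis by blast
qed

lemma Wh: "t \<noteq> 0 \<Longrightarrow> ratW P Q (t * x) (t * y) = t ^ N * ratW P Q x y"
  using ratW_hom[OF W_hom] by blast

lemma key:
  assumes t: "t \<noteq> 0" and inS: "(t * a, t * c) \<in> S" and tc: "1 + t * c \<noteq> 0"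
    and Qac: "eval2 Q a c \<noteq> 0"
    and Qs: "eval2 Q (U (t * a) (t * c) / t * (1 + t * c)) c \<noteq> 0"
  shows "ratW P Q (U (t * a) (t * c) / t * (1 + t * c)) c = (1 + t * c) ^ N * ratW P Q a c"
proof -
  define \<sigma> where "\<sigma> = U (t * a) (t * c) / t * (1 + t * c)"
  define k where "k = t / (1 + t * c)"
  have k0: "k \<noteq> 0" using t tc by (simp add: k_def)
  have u: "U (t * a) (t * c) = k * \<sigma>" using t tc by (simp add: k_def \<sigma>_def)
  have v: "t * c / (t * c + 1) = k * c" using tc by (simp add: k_def field_simps add.commute)
  have "eval2 Q (t * a) (t * c) \<noteq> 0" using Qh[of t a c] t Qac by simp
  moreover have "eval2 Q (U (t * a) (t * c)) (t * c / (t * c + 1)) \<noteq> 0"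
    unfolding u v Qh using k0 Qs by (simp add: \<sigma>_def)
  moreover have "t * c + 1 \<noteq> 0" using tc by (simp add: add.commute)
  ultimately have "ratW P Q (U (t * a) (t * c)) (t * c / (t * c + 1)) = ratW P Q (t * a) (t * c)"
    using U_eq inS by auto
  hence "k ^ N * ratW P Q \<sigma> c = t ^ N * ratW P Q a c" unfolding u v Wh[OF k0] Wh[OF t] .
  hence "ratW P Q \<sigma> c = (t / k) ^ N * ratW P Q a c" using k0 by (simp add: field_simps power_divide)
  also have "t / k = 1 + t * c" using t tc by (simp add: k_def)
  finally show ?thesis by (simp add: \<sigma>_def)
qed


lemma vf_lim:
  assumes D0: "(x, y) \<in> D0" and Q0: "eval2 Q x y \<noteq> 0" and Wx0: "ratWx P Q x y \<noteq> 0"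
  shows "((\<lambda>z. (U (z * x) (z * y) / z - x) / z)
     \<longlongrightarrow> of_nat N * y * ratW P Q x y / ratWx P Q x y - x * y) (at 0)"
proof -
  define s where "s z = U (z * x) (z * y) / z * (1 + z * y)" for z
  have ul: "((\<lambda>z. U (z * x) (z * y) / z) \<longlongrightarrow> x) (at 0)" using U_bdry D0 by auto
  have yl: "((\<lambda>z. 1 + z * y) \<longlongrightarrow> 1) (at 0)"
  proof -
    have "((\<lambda>z. 1 + z * y) \<longlongrightarrow> 1 + 0 * y) (at 0)" by (intro tendsto_intros)
    thus ?thesis by simp
  qed
  have sl: "(s \<longlongrightarrow> x) (at 0)" unfolding s_def using tendsto_mult[OF ul yl] by simp
  have e1: "eventually (\<lambda>z. eval2 Q (s z) y \<noteq> 0) (at 0)"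
    using tendsto_imp_eventually_ne[OF eval2_tendsto1[OF sl] Q0] .
  have e2: "eventually (\<lambda>z. 1 + z * y \<noteq> 0) (at 0)"
    using tendsto_imp_eventually_ne[OF yl] by simp
  have e3: "eventually (\<lambda>z. norm z < rc) (at (0::complex))" using ev_norm_less[OF rc(1)] .
  have e4: "eventually (\<lambda>z. z \<noteq> 0) (at (0::complex))" by (simp add: eventually_at_filter)
  have ev: "eventually (\<lambda>z. ratW P Q (s z) y - ratW P Q x y = ((1 + z * y) ^ N - 1) * ratW P Q x y) (at 0)"
    using e1 e2 e3 e4
  proof eventually_elim
    case (elim z)
    have "ratW P Q (s z) y = (1 + z * y) ^ N * ratW P Q x y"
      unfolding s_def by (rule key) (use elim rc(2)[OF D0] Q0 in \<open>auto simp: s_def\<close>)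
    thus ?case by (simp add: algebra_simps)
  qed
  have gl: "((\<lambda>z. ((1 + z * y) ^ N - 1) * ratW P Q x y / z) \<longlongrightarrow> of_nat N * y * ratW P Q x y) (at 0)"
    using tendsto_mult[OF pow_quot_lim tendsto_const, of y N "ratW P Q x y"] by simp
  have L: "((\<lambda>z. (s z - x) / z) \<longlongrightarrow> of_nat N * y * ratW P Q x y / ratWx P Q x y) (at 0)"
    by (rule implicit_deriv_lim[OF ratW_deriv[OF Q0] Wx0 sl ev gl])
  have "((\<lambda>z. ((s z - x) / z - x * y) / (1 + z * y)) \<longlongrightarrow>
      (of_nat N * y * ratW P Q x y / ratWx P Q x y - x * y) / 1) (at 0)"
    by (intro tendsto_intros L yl) simp
  moreover have "eventually (\<lambda>z. ((s z - x) / z - x * y) / (1 + z * y) = (U (z * x) (z * y) / z - x) / z) (at 0)"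
    using e2 e4
  proof eventually_elim
    case (elim z)
    define u where "u = U (z * x) (z * y) / z"
    have a: "u * (1 + z * y) - x - x * y * z = (u - x) * (1 + z * y)" by (simp add: algebra_simps)
    have "(u * (1 + z * y) - x) / z - x * y = (u * (1 + z * y) - x - x * y * z) / z"
      using elim by (simp add: diff_divide_distrib)
    also have "\<dots> = (u - x) * (1 + z * y) / z" by (simp add: a)
    finally have "((u * (1 + z * y) - x) / z - x * y) / (1 + z * y) = (u - x) * (1 + z * y) / z / (1 + z * y)"
      by simp
    also have "\<dots> = (u - x) / z" using elim by simp
    finally have "((u * (1 + z * y) - x) / z - x * y) / (1 + z * y) = (u - x) / z" .
    thus ?case by (simp add: s_def u_def)
  qed
  ultimately show ?thesis by (simp add: Lim_transform_eventually)
qed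

end

context prop3
begin

lemma s_lim: "(x, y) \<in> D0 \<Longrightarrow> ((\<lambda>t. U (t * x) (t * y) / t * (1 + t * y)) \<longlongrightarrow> x) (at 0)"
proof -
  assume D0: "(x, y) \<in> D0"
  have ul: "((\<lambda>z. U (z * x) (z * y) / z) \<longlongrightarrow> x) (at 0)" using U_bdry D0 by auto
  have yl: "((\<lambda>z. 1 + z * y) \<longlongrightarrow> 1 + 0 * y) (at 0)" by (intro tendsto_intros)
  show ?thesis using tendsto_mult[OF ul yl] by simp
qed

lemma frac_aux: "(t::complex) \<noteq> 0 \<Longrightarrow> t * c / (t * c + 1) / t = c / (1 + t * c)"
  by (simp add: add.commute)

lemma flow_ev:
  assumes D0: "(x, y) \<in> D0" and Q0: "eval2 Q x y \<noteq> 0" and Wx0: "ratWx P Q x y \<noteq> 0"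
  shows "eventually (\<lambda>(z, w). z \<noteq> 0 \<and> w \<noteq> 0 \<and> z + w \<noteq> 0 \<longrightarrow>
     fpow U (\<lambda>x y. y / (y + 1)) w (fpow U (\<lambda>x y. y / (y + 1)) z (x, y)) =
     fpow U (\<lambda>x y. y / (y + 1)) (z + w) (x, y)) (at (0, 0))"
proof -
  define h where "h v = ratW P Q v y" for v
  define SQ where "SQ = (\<lambda>v. eval2 Q v y) -` (- {0})"
  have oSQ: "open SQ" unfolding SQ_def
    by (intro continuous_open_vimage) (auto intro: eval2_isCont1)
  have xSQ: "x \<in> SQ" using Q0 by (simp add: SQ_def)
  have hol: "h holomorphic_on SQ"
  proof (subst holomorphic_on_open[OF oSQ], intro ballI)
    fix v assume "v \<in> SQ"
    hence "eval2 Q v y \<noteq> 0" by (simp add: SQ_def)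
    thus "\<exists>f'. (h has_field_derivative f') (at v)" unfolding h_def using ratW_deriv by blast
  qed
  have dh: "deriv h x \<noteq> 0" unfolding h_def using DERIV_imp_deriv[OF ratW_deriv[OF Q0]] Wx0 by simp
  obtain \<rho> where \<rho>: "\<rho> > 0" "ball x \<rho> \<subseteq> SQ" "inj_on h (ball x \<rho>)"
    using has_complex_derivative_locally_injective[OF hol xSQ oSQ dh] by blast
  define s where "s t = U (t * x) (t * y) / t * (1 + t * y)" for t
  have sl: "(s \<longlongrightarrow> x) (at 0)" unfolding s_def using s_lim[OF D0] .
  have "eventually (\<lambda>t. s t \<in> ball x (\<rho>/2)) (at 0)"
    using sl \<rho>(1) by (intro topological_tendstoD) auto
  moreover have "eventually (\<lambda>t. norm t < rc) (at (0::complex))" using ev_norm_less[OF rc(1)] .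
  moreover have "eventually (\<lambda>t. norm (t * y) < 1/2) (at (0::complex))"
  proof -
    have "((\<lambda>t. t * y) \<longlongrightarrow> 0 * y) (at (0::complex))" by (intro tendsto_intros)
    hence "((\<lambda>t. norm (t * y)) \<longlongrightarrow> 0) (at (0::complex))" using tendsto_norm_zero by force
    thus ?thesis by (rule order_tendstoD) simp
  qed
  ultimately have "eventually (\<lambda>t. s t \<in> ball x (\<rho>/2) \<and> norm t < rc \<and> norm (t * y) < 1/2) (at 0)"
    by eventually_elim auto
  then obtain \<delta>1 where \<delta>1: "\<delta>1 > 0" and P1: "\<And>t. t \<noteq> 0 \<Longrightarrow> dist t 0 < \<delta>1 \<Longrightarrow>
      s t \<in> ball x (\<rho>/2) \<and> norm t < rc \<and> norm (t * y) < 1/2"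
    unfolding eventually_at by auto
  have eqs: "h (s t) = (1 + t * y) ^ N * h x" if "t \<noteq> 0" "dist t 0 < \<delta>1" for t
  proof -
    note p = P1[OF that]
    have "1 + t * y \<noteq> 0"
    proof
      assume "1 + t * y = 0"
      hence "t * y = -1" by (simp add: add_eq_0_iff)
      thus False using p by simp
    qed
    moreover have "s t \<in> ball x \<rho>" using p \<rho>(1) by auto
    hence "eval2 Q (s t) y \<noteq> 0" using \<rho>(2) by (auto simp: SQ_def)
    ultimately show ?thesis unfolding h_def s_def
      by (intro key) (use that p rc(2)[OF D0] Q0 in \<open>auto simp: s_def\<close>)
  qed
  define x1 where "x1 z = U (z * x) (z * y) / z" for z
  define y1 where "y1 z = y / (1 + z * y)" for z
  have "((\<lambda>z. (x1 z, y1 z)) \<longlongrightarrow> (x, y)) (at 0)"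
  proof (intro tendsto_Pair)
    show "(x1 \<longlongrightarrow> x) (at 0)" unfolding x1_def using U_bdry D0 by auto
    have "((\<lambda>z. y / (1 + z * y)) \<longlongrightarrow> y / (1 + 0 * y)) (at 0)" by (intro tendsto_intros) auto
    thus "(y1 \<longlongrightarrow> y) (at 0)" unfolding y1_def by simp
  qed
  hence "eventually (\<lambda>z. (x1 z, y1 z) \<in> D0) (at 0)"
    using D0 D0_open by (intro topological_tendstoD) auto
  then obtain \<delta>2 where \<delta>2: "\<delta>2 > 0" and P2: "\<And>z. z \<noteq> 0 \<Longrightarrow> dist z 0 < \<delta>2 \<Longrightarrow> (x1 z, y1 z) \<in> D0"
    unfolding eventually_at by auto
  define \<delta> where "\<delta> = min (\<delta>1/2) (min \<delta>2 (min rc (1 / (4 * norm y + 1))))"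
  have \<delta>0: "\<delta> > 0" unfolding \<delta>_def using \<delta>1 \<delta>2 rc(1) norm_ge_zero[of y] by (simp, linarith)
  have dl: "\<delta> \<le> \<delta>1/2" "\<delta> \<le> \<delta>2" "\<delta> \<le> rc" "\<delta> \<le> 1 / (4 * norm y + 1)" unfolding \<delta>_def by (simp_all add: min_le_iff_disj)
  have main: "fpow U (\<lambda>x y. y / (y + 1)) w (fpow U (\<lambda>x y. y / (y + 1)) z (x, y)) =
     fpow U (\<lambda>x y. y / (y + 1)) (z + w) (x, y)"
    if z0: "z \<noteq> 0" and w0: "w \<noteq> 0" and zw0: "z + w \<noteq> 0" and zd: "norm z < \<delta>" and wd: "norm w < \<delta>" for z w
  proof -
    have nz1: "1 + a \<noteq> 0" if "norm a < 1" for a :: complex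
    proof
      assume "1 + a = 0"
      hence "a = -1" by (simp add: add_eq_0_iff)
      thus False using that by simp
    qed
    have dz: "dist z 0 < \<delta>1" "dist z 0 < \<delta>2" using zd dl \<delta>1 by auto
    note pz = P1[OF z0 dz(1)]
    have zy: "1 + z * y \<noteq> 0" using pz by (intro nz1) auto
    have D0z: "(x1 z, y1 z) \<in> D0" using P2[OF z0 dz(2)] .
    define m where "m = 1 / (1 + z * y)"
    have m0: "m \<noteq> 0" using zy by (simp add: m_def)
    have x1m: "x1 z = m * s z" using zy z0 by (simp add: m_def s_def x1_def)
    have y1m: "y1 z = m * y" by (simp add: m_def y1_def)
    have "s z \<in> ball x \<rho>" using pz \<rho>(1) by auto
    hence Qsz: "eval2 Q (s z) y \<noteq> 0" using \<rho>(2) by (auto simp: SQ_def)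
    have Qx1: "eval2 Q (x1 z) (y1 z) \<noteq> 0" unfolding x1m y1m Qh using m0 Qsz by simp
    have hsz: "h (s z) = (1 + z * y) ^ N * h x" using eqs[OF z0 dz(1)] .
    have ny1: "norm (y1 z) \<le> 2 * norm y"
    proof -
      have "norm (1 + z * y) \<ge> 1 - norm (z * y)" using norm_diff_ineq[of 1 "z * y"] by simp
      hence n1: "norm (1 + z * y) \<ge> 1/2" using pz by simp
      have "norm (y1 z) = norm y / norm (1 + z * y)" by (simp add: y1_def norm_divide)
      also have "\<dots> \<le> norm y / (1/2)" using n1 by (intro divide_left_mono) auto
      finally show ?thesis by simp
    qed
    have wy1: "1 + v * y1 z \<noteq> 0" if "norm v < \<delta>" for v
    proof (rule nz1)
      have "norm (v * y1 z) \<le> \<delta> * (2 * norm y)"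
        unfolding norm_mult using that ny1 \<delta>0 by (intro mult_mono) auto
      also have "\<dots> \<le> 1 / (4 * norm y + 1) * (2 * norm y)"
        by (intro mult_right_mono) (use dl in auto)
      also have "\<dots> < 1" using norm_ge_zero[of y] by (simp add: divide_less_eq add_pos_nonneg; linarith)
      finally show "norm (v * y1 z) < 1" .
    qed
    define \<sigma> where "\<sigma> v = U (v * x1 z) (v * y1 z) / v * (1 + v * y1 z) * (1 + z * y)" for v
    define \<Omega> where "\<Omega> = ball 0 \<delta> - {0, -z}"
    have inS: "(v * x1 z, v * y1 z) \<in> S" if "v \<in> \<Omega>" for v
      using that rc(2)[OF D0z, of v] dl by (auto simp: \<Omega>_def)
    have eq\<sigma>: "\<sigma> v = s (z + v)" if v: "v \<in> \<Omega>" "\<sigma> v \<in> ball x \<rho>" for v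
    proof -
      have v0: "v \<noteq> 0" "norm v < \<delta>" "v \<noteq> -z" using v by (auto simp: \<Omega>_def)
      have zv0: "z + v \<noteq> 0" using v0 by (simp add: add_eq_0_iff)
      have "norm (z + v) \<le> norm z + norm v" by (rule norm_triangle_ineq)
      also have "\<dots> < \<delta>1" using zd v0 dl by auto
      finally have dzv: "dist (z + v) 0 < \<delta>1" by simp
      note pzv = P1[OF zv0 dzv]
      define \<sigma>1 where "\<sigma>1 = U (v * x1 z) (v * y1 z) / v * (1 + v * y1 z)"
      have \<sigma>1m: "\<sigma>1 = m * \<sigma> v" using zy by (simp add: \<sigma>1_def \<sigma>_def m_def)
      have Q\<sigma>: "eval2 Q (\<sigma> v) y \<noteq> 0" using v(2) \<rho>(2) by (auto simp: SQ_def)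
      have "ratW P Q \<sigma>1 (y1 z) = (1 + v * y1 z) ^ N * ratW P Q (x1 z) (y1 z)"
        unfolding \<sigma>1_def
        by (rule key[OF v0(1) inS[OF v(1)] wy1[OF v0(2)] Qx1])
           (unfold \<sigma>1_def[symmetric], unfold \<sigma>1m y1m Qh, simp add: Q\<sigma> m0)
      hence "m ^ N * h (\<sigma> v) = (1 + v * y1 z) ^ N * (m ^ N * ((1 + z * y) ^ N * h x))"
        unfolding \<sigma>1m y1m x1m Wh[OF m0] h_def[symmetric] hsz by simp
      hence "h (\<sigma> v) = ((1 + v * y1 z) * (1 + z * y)) ^ N * h x"
        using m0 by (simp add: power_mult_distrib)
      also have "(1 + v * y1 z) * (1 + z * y) = 1 + (z + v) * y"
        using zy by (simp add: y1_def field_simps)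
      finally have "h (\<sigma> v) = h (s (z + v))" using eqs[OF zv0 dzv] by simp
      moreover have "s (z + v) \<in> ball x \<rho>" using pzv \<rho>(1) by auto
      ultimately show ?thesis using \<rho>(3) v(2) by (auto dest: inj_onD)
    qed
    have sball: "s (z + v) \<in> ball x (\<rho>/2)" if "v \<in> \<Omega>" for v
    proof -
      have v0: "v \<noteq> 0" "norm v < \<delta>" "v \<noteq> -z" using that by (auto simp: \<Omega>_def)
      have zv0: "z + v \<noteq> 0" using v0 by (simp add: add_eq_0_iff)
      have "norm (z + v) \<le> norm z + norm v" by (rule norm_triangle_ineq)
      also have "\<dots> < \<delta>1" using zd v0 dl by auto
      finally have dzv: "dist (z + v) 0 < \<delta>1" by simp
      show ?thesis using P1[OF zv0 dzv] by auto
    qed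
    have conn: "connected \<Omega>" unfolding \<Omega>_def
      by (intro connected_open_delete_finite) auto
    have c1: "continuous_on \<Omega> (\<lambda>v. (\<lambda>(x, y). U x y) (v * x1 z, v * y1 z))"
      by (rule continuous_on_compose2[OF U_cont]) (auto intro!: continuous_intros inS)
    have cont: "continuous_on \<Omega> \<sigma>" unfolding \<sigma>_def
      using c1 by (auto intro!: continuous_intros simp: \<Omega>_def)
    define T where "T = \<Omega> \<inter> \<sigma> -` ball x \<rho>"
    have "openin (top_of_set \<Omega>) T" unfolding T_def
      by (rule continuous_openin_preimage_gen[OF cont open_ball])
    moreover have "T = \<Omega> \<inter> \<sigma> -` cball x (\<rho>/2)"
    proof
      show "T \<subseteq> \<Omega> \<inter> \<sigma> -` cball x (\<rho>/2)"
      proof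
        fix v assume "v \<in> T"
        hence v: "v \<in> \<Omega>" "\<sigma> v \<in> ball x \<rho>" by (auto simp: T_def)
        show "v \<in> \<Omega> \<inter> \<sigma> -` cball x (\<rho>/2)" using eq\<sigma>[OF v] sball[OF v(1)] v(1) by auto
      qed
      show "\<Omega> \<inter> \<sigma> -` cball x (\<rho>/2) \<subseteq> T" using \<rho>(1) by (auto simp: T_def)
    qed
    hence "closedin (top_of_set \<Omega>) T"
      using continuous_closedin_preimage[OF cont closed_cball] by simp
    moreover have "T \<noteq> {}"
    proof -
      have ul: "((\<lambda>v. U (v * x1 z) (v * y1 z) / v) \<longlongrightarrow> x1 z) (at 0)" using U_bdry D0z by auto
      have yl: "((\<lambda>v. 1 + v * y1 z) \<longlongrightarrow> 1 + 0 * y1 z) (at 0)" by (intro tendsto_intros)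
      have "(\<sigma> \<longlongrightarrow> x1 z * (1 + 0 * y1 z) * (1 + z * y)) (at 0)"
        unfolding \<sigma>_def by (intro tendsto_intros ul yl)
      hence "(\<sigma> \<longlongrightarrow> s z) (at 0)" using z0 by (simp add: s_def x1_def)
      moreover have "s z \<in> ball x \<rho>" using pz \<rho>(1) by auto
      ultimately have e1: "eventually (\<lambda>v. \<sigma> v \<in> ball x \<rho>) (at 0)"
        by (intro topological_tendstoD) auto
      have e2: "eventually (\<lambda>v. norm v < min \<delta> (norm z)) (at (0::complex))"
      proof -
        have "0 < min \<delta> (norm z)" using \<delta>0 z0 by simp
        from ev_norm_less[OF this] show ?thesis .
      qed
      have e3: "eventually (\<lambda>v. v \<noteq> 0) (at (0::complex))" by (simp add: eventually_at_filter)
      have "eventually (\<lambda>v. v \<in> T) (at 0)" using e1 e2 e3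
      proof eventually_elim
        case (elim v)
        hence "v \<noteq> -z" by auto
        thus ?case using elim by (auto simp: T_def \<Omega>_def)
      qed
      then obtain v where "v \<in> T" using eventually_happens'[OF at_neq_bot] by blast
      thus ?thesis by auto
    qed
    ultimately have "T = \<Omega>" using conn unfolding connected_clopen by blast
    have allv: "\<forall>v\<in>\<Omega>. \<sigma> v = s (z + v)"
    proof
      fix v assume "v \<in> \<Omega>"
      hence "v \<in> T" using \<open>T = \<Omega>\<close> by simp
      thus "\<sigma> v = s (z + v)" using eq\<sigma> by (auto simp: T_def)
    qed
    have w\<Omega>: "w \<in> \<Omega>" using w0 wd zw0 by (auto simp: \<Omega>_def add_eq_0_iff)
    have zw: "1 + (z + w) * y \<noteq> 0"
    proof (rule nz1)
      have "norm (z + w) \<le> norm z + norm w" by (rule norm_triangle_ineq)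
      also have "\<dots> < \<delta>1" using zd wd dl by auto
      finally have "dist (z + w) 0 < \<delta>1" by simp
      thus "norm ((z + w) * y) < 1" using P1[OF zw0] by auto
    qed
    have f1: "fpow U (\<lambda>x y. y / (y + 1)) z (x, y) = (x1 z, y1 z)"
      using z0 zy by (simp add: fpow_def x1_def y1_def frac_aux)
    have k: "(1 + w * y1 z) * (1 + z * y) = 1 + (z + w) * y"
      using zy by (simp add: y1_def field_simps)
    have c1: "U (w * x1 z) (w * y1 z) / w = U ((z + w) * x) ((z + w) * y) / (z + w)"
    proof -
      have "U (w * x1 z) (w * y1 z) / w * (1 + (z + w) * y) = U ((z + w) * x) ((z + w) * y) / (z + w) * (1 + (z + w) * y)"
      proof -
        have "\<sigma> w = s (z + w)" using allv w\<Omega> by blast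
        hence "U (w * x1 z) (w * y1 z) / w * ((1 + w * y1 z) * (1 + z * y)) = U ((z + w) * x) ((z + w) * y) / (z + w) * (1 + (z + w) * y)"
          unfolding \<sigma>_def s_def by (simp only: mult.assoc)
        thus ?thesis unfolding k .
      qed
      thus ?thesis using mult_right_cancel[OF zw] by blast
    qed
    have c2: "w * y1 z / (w * y1 z + 1) / w = (z + w) * y / ((z + w) * y + 1) / (z + w)"
    proof -
      have "w * y1 z / (w * y1 z + 1) / w = y1 z / (1 + w * y1 z)" using frac_aux[OF w0] .
      also have "\<dots> = y / ((1 + w * y1 z) * (1 + z * y))" by (simp add: y1_def)
      also have "\<dots> = y / (1 + (z + w) * y)" unfolding k ..
      also have "\<dots> = (z + w) * y / ((z + w) * y + 1) / (z + w)" using frac_aux[OF zw0] by simp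
      finally show ?thesis .
    qed
    show ?thesis unfolding f1 using c1 c2 by (simp add: fpow_def)
  qed

  show ?thesis
    unfolding eventually_at
  proof (intro exI[of _ \<delta>] conjI \<delta>0 ballI impI, clarify)
    fix z w :: complex
    assume "dist (z, w) (0, 0) < \<delta>" "z \<noteq> 0" "w \<noteq> 0" "z + w \<noteq> 0"
    moreover have "norm z \<le> dist (z, w) (0, 0)" "norm w \<le> dist (z, w) (0, 0)"
      using dist_fst_le[of "(z, w)" "(0, 0)"] dist_snd_le[of "(z, w)" "(0, 0)"] by auto
    ultimately show "fpow U (\<lambda>x y. y / (y + 1)) w (fpow U (\<lambda>x y. y / (y + 1)) z (x, y)) =
     fpow U (\<lambda>x y. y / (y + 1)) (z + w) (x, y)" by (intro main) auto
  qed
qed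

end

lemma hom_poly2_0: "hom_poly2 d 0" by (simp add: hom_poly2_def)

lemma hom_poly2_add: "hom_poly2 d p \<Longrightarrow> hom_poly2 d q \<Longrightarrow> hom_poly2 d (p + q)"
  unfolding hom_poly2_def by (metis add.right_neutral add.left_neutral coeff_add)

lemma hom_poly2_sum: "(\<And>i. i \<in> A \<Longrightarrow> hom_poly2 d (f i)) \<Longrightarrow> hom_poly2 d (sum f A)"
  by (induction A rule: infinite_finite_induct) (auto intro: hom_poly2_0 hom_poly2_add)

lemma hom_poly2_monom: "hom_poly2 (i + j) (monom (monom c i) j)"
  unfolding hom_poly2_def by (auto simp: coeff_monom split: if_splits)

lemma eval2_monom[simp]: "eval2 (monom (monom c i) j) x y = c * x ^ i * y ^ j"
  by (simp add: eval2_alt poly_monom)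

definition homz :: "complex \<Rightarrow> nat \<Rightarrow> complex poly \<Rightarrow> complex poly poly" where
  "homz y0 n f = (\<Sum>i\<le>n. monom (monom (coeff f i / y0 ^ (n - i)) i) (n - i))"

lemma homz_hom: "hom_poly2 n (homz y0 n f)"
  unfolding homz_def by (intro hom_poly2_sum) (metis atMost_iff hom_poly2_monom le_add_diff_inverse)

lemma homz_eval:
  assumes "degree f \<le> n" "y \<noteq> 0" "y0 \<noteq> 0"
  shows "eval2 (homz y0 n f) x y = (y / y0) ^ n * poly f (x * y0 / y)"
proof -
  have "eval2 (homz y0 n f) x y = (\<Sum>i\<le>n. coeff f i / y0 ^ (n - i) * x ^ i * y ^ (n - i))"
    unfolding homz_def eval2_sum by simp
  also have "\<dots> = (\<Sum>i\<le>n. (y / y0) ^ n * (coeff f i * (x * y0 / y) ^ i))"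
  proof (intro sum.cong refl)
    fix i assume "i \<in> {..n}"
    hence i: "n = i + (n - i)" by simp
    have xr: "(y / y0) * (x * y0 / y) = x" using assms by (simp add: field_simps)
    have "(y / y0) ^ n * (coeff f i * (x * y0 / y) ^ i) =
        (y / y0) ^ i * (y / y0) ^ (n - i) * (coeff f i * (x * y0 / y) ^ i)"
      by (subst i) (simp only: power_add)
    also have "\<dots> = coeff f i * ((y / y0) * (x * y0 / y)) ^ i * (y / y0) ^ (n - i)"
      by (simp only: power_mult_distrib mult_ac)
    also have "\<dots> = coeff f i * x ^ i * (y / y0) ^ (n - i)" by (simp only: xr)
    also have "\<dots> = coeff f i / y0 ^ (n - i) * x ^ i * y ^ (n - i)" by (simp add: power_divide)
    finally show "coeff f i / y0 ^ (n - i) * x ^ i * y ^ (n - i) = (y / y0) ^ n * (coeff f i * (x * y0 / y) ^ i)"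
      by simp
  qed
  also have "\<dots> = (y / y0) ^ n * poly f (x * y0 / y)"
    by (simp add: sum_distrib_left poly_sum_le[OF assms(1)])
  finally show ?thesis .
qed

lemma hom_eval_line:
  assumes "hom_poly2 a P" "y \<noteq> 0" "y0 \<noteq> 0"
  shows "eval2 P x y = (y / y0) ^ a * poly (poly P [:y0:]) (x * y0 / y)"
proof -
  have "eval2 P x y = eval2 P ((y / y0) * (x * y0 / y)) ((y / y0) * y0)"
    using assms by (simp add: field_simps)
  also have "\<dots> = (y / y0) ^ a * eval2 P (x * y0 / y) y0" by (rule eval2_hom[OF assms(1)])
  finally show ?thesis by (simp add: eval2_alt)
qed

lemma homogenize:
  assumes hP: "hom_poly2 a P" and hQ: "hom_poly2 b Q" and Q0: "Q \<noteq> 0"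
    and ab: "a = b + m * g" and m2: "m \<ge> 2" and B0: "B \<noteq> 0" and eq: "P * B ^ m = A ^ m * Q"
  shows "is_hom_power P Q"
proof -
  have "B * [:0, 1:] \<noteq> 0" using B0 by simp
  then obtain x' y0 where "eval2 (B * [:0, 1:]) x' y0 \<noteq> 0"
    using eval2_nonvanish[of "B * [:0,1:]" UNIV] by auto
  hence "eval2 B x' y0 * y0 \<noteq> 0" by (metis eval2_mult eval2_Y)
  hence y0: "y0 \<noteq> 0" and Bx: "eval2 B x' y0 \<noteq> 0" by (metis mult_zero_right, metis mult_zero_left)
  define u where "u F = poly F [:y0:]" for F :: "complex poly poly"
  have pu: "poly (u F) x = eval2 F x y0" for F x by (simp add: u_def eval2_alt)
  have ueq: "u P * u B ^ m = u A ^ m * u Q" using arg_cong[OF eq, of u] by (simp add: u_def)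
  define nb where "nb = max (degree (u B)) (degree (u A))"
  define na where "na = nb + g"
  define A' where "A' = homz y0 na (u A)"
  define B' where "B' = homz y0 nb (u B)"
  have dA: "degree (u A) \<le> na" and dB: "degree (u B) \<le> nb" by (auto simp: na_def nb_def)
  have "eval2 B' x' y0 = poly (u B) x'" unfolding B'_def using homz_eval[OF dB y0 y0] y0 by simp
  hence B'0: "B' \<noteq> 0" using Bx pu by auto
  have hr: "hom_rat_fun (int g) A' B'"
    unfolding hom_rat_fun_def
  proof (intro conjI B'0 exI)
    show "hom_poly2 na A'" "hom_poly2 nb B'" unfolding A'_def B'_def by (rule homz_hom)+
    show "int na - int nb = int g" by (simp add: na_def)
  qed
  define Z where "Z = P * B' ^ m - A' ^ m * Q"
  have "Z = 0"
  proof (rule eval2_eq_0_on_open)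
    show "open {p :: complex \<times> complex. snd p \<noteq> 0}" by (intro open_Collect_neq continuous_intros)
    show "{p :: complex \<times> complex. snd p \<noteq> 0} \<noteq> {}" by (auto intro!: exI[of _ "(0, 1)"])
    have "eval2 Z x y = 0" if y: "y \<noteq> 0" for x y :: complex
    proof -
      define \<tau> where "\<tau> = y / y0"
      define r where "r = x * y0 / y"
      have eP: "eval2 P x y = \<tau> ^ a * poly (u P) r" unfolding \<tau>_def r_def u_def using hom_eval_line[OF hP y y0] .
      have eQ: "eval2 Q x y = \<tau> ^ b * poly (u Q) r" unfolding \<tau>_def r_def u_def using hom_eval_line[OF hQ y y0] .
      have eA: "eval2 A' x y = \<tau> ^ na * poly (u A) r" unfolding \<tau>_def r_def A'_def using homz_eval[OF dA y y0] .
      have eB: "eval2 B' x y = \<tau> ^ nb * poly (u B) r" unfolding \<tau>_def r_def B'_def using homz_eval[OF dB y y0] .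
      have pe: "poly (u P) r * poly (u B) r ^ m = poly (u A) r ^ m * poly (u Q) r"
        using arg_cong[OF ueq, of "\<lambda>f. poly f r"] by simp
      have e: "eval2 Z x y = \<tau> ^ (a + m * nb) * (poly (u P) r * poly (u B) r ^ m)
          - \<tau> ^ (b + m * na) * (poly (u A) r ^ m * poly (u Q) r)"
        unfolding Z_def by (simp add: eP eQ eA eB power_mult_distrib power_add power_mult[symmetric] algebra_simps)
      have ex: "a + m * nb = b + m * na" by (simp add: ab na_def algebra_simps)
      show "eval2 Z x y = 0" using e pe unfolding ex by simp
    qed
    thus "\<forall>(x, y)\<in>{p. snd p \<noteq> 0}. eval2 Z x y = 0" by auto
  qed
  hence "P * B' ^ m = A' ^ m * Q" by (simp add: Z_def)
  thus ?thesis unfolding is_hom_power_def using m2 hr by blast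
qed

lemma eval3_smult[simp]: "eval3 (smult c R) x y t = eval2 c x y * eval3 R x y t"
  by (simp add: eval3_alt)
lemma eval3_pCons[simp]: "eval3 (pCons c R) x y t = eval2 c x y + t * eval3 R x y t"
  by (simp add: eval3_alt)
lemma eval2_pCons[simp]: "eval2 (pCons c p) x y = poly c x + y * eval2 p x y"
  by (simp add: eval2_alt)

definition comp3 :: "complex poly poly \<Rightarrow> complex poly poly poly \<Rightarrow> complex poly poly poly \<Rightarrow> complex poly poly poly" where
  "comp3 p A B = (\<Sum>j\<le>degree p. \<Sum>i\<le>dg2 p. [:[:[:coeff (coeff p j) i:]:]:] * A ^ i * B ^ j)"

lemma eval3_comp3: "eval3 (comp3 p A B) x y t = eval2 p (eval3 A x y t) (eval3 B x y t)"
  unfolding comp3_def eval2_dsum by (simp add: eval3_sum mult.assoc)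

lemma eval3_Y[simp]: "eval3 [:[:0, 1:]:] x y t = y" by simp

lemma nz_by_eval: "eval2 p x y \<noteq> 0 \<Longrightarrow> p \<noteq> 0" by auto

context prop3
begin

lemma P_nz: "P \<noteq> 0"
proof
  assume P0: "P = 0"
  have "hom_rat_fun 0 0 1"
    unfolding hom_rat_fun_def hom_poly2_def by (auto intro!: exI[of _ 0] simp: coeff_1 split: if_splits)
  hence "is_hom_power P Q" unfolding is_hom_power_def P0
    by (intro exI[of _ 0] exI[of _ 1] exI[of _ 2]) auto
  thus False using W_not_power by simp
qed

lemma Q_nz: "Q \<noteq> 0" using W_hom by (simp add: hom_rat_fun_def)

lemma degs: obtains a b where "hom_poly2 a P" "hom_poly2 b Q" "a = b + N"
proof -
  obtain a b where "hom_poly2 a P" "hom_poly2 b Q" "int a - int b = int N"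
    using W_hom unfolding hom_rat_fun_def by blast
  thus ?thesis using that[of a b] by linarith
qed

lemma alg_v: "algebraic_on S (\<lambda>x y. y / (y + 1))"
  unfolding algebraic_on_def
proof (intro exI conjI)
  define R :: "complex poly poly poly" where "R = ([:[:0, 1:]:] + 1) * (([:[:0, 1:]:] + 1) * [:0, 1:] - [:[:0, 1:]:])"
  have "eval3 R 0 0 1 = 1" by (simp add: R_def)
  thus "R \<noteq> 0" by auto
  show "\<forall>(x, y)\<in>S. eval3 R x y (y / (y + 1)) = 0"
  proof clarify
    fix x y :: complex
    show "eval3 R x y (y / (y + 1)) = 0"
      by (cases "y + 1 = 0") (simp_all add: R_def add.commute)
  qed
qed

lemma alg_U: "algebraic_on S U"
proof -
  obtain a b where ab: "hom_poly2 a P" "hom_poly2 b Q" "a = b + N" using degs by blast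
  define Y3 :: "complex poly poly poly" where "Y3 = [:[:0, 1:]:]"
  define T3 :: "complex poly poly poly" where "T3 = [:0, 1:]"
  define Ph where "Ph = comp3 P ((Y3 + 1) * T3) Y3"
  define Qh where "Qh = comp3 Q ((Y3 + 1) * T3) Y3"
  define R where "R = Y3 * (Y3 + 1) * [:Q:] * Qh * (Ph * [:Q:] - (Y3 + 1) ^ N * [:P:] * Qh)"
  have evR: "eval3 R x y t = y * (y + 1) * eval2 Q x y * eval2 Q ((y + 1) * t) y *
      (eval2 P ((y + 1) * t) y * eval2 Q x y - (y + 1) ^ N * eval2 P x y * eval2 Q ((y + 1) * t) y)" for x y t
    by (simp add: R_def Ph_def Qh_def eval3_comp3 Y3_def T3_def mult.commute)
  have van: "eval3 R x y (U x y) = 0" if xy: "(x, y) \<in> S" for x y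
  proof (cases "y = 0 \<or> y + 1 = 0 \<or> eval2 Q x y = 0 \<or> eval2 Q ((y + 1) * U x y) y = 0")
    case True
    then show ?thesis unfolding evR by auto
  next
    case False
    hence y0: "y \<noteq> 0" "y + 1 \<noteq> 0" and Qxy: "eval2 Q x y \<noteq> 0" and Qu': "eval2 Q ((y + 1) * U x y) y \<noteq> 0"
      by auto
    define u where "u = U x y"
    define v where "v = y / (y + 1)"
    have yv: "y = (y + 1) * v" using y0 by (simp add: v_def)
    have Qu: "eval2 Q ((y + 1) * u) y = (y + 1) ^ b * eval2 Q u v"
      by (subst yv) (rule eval2_hom[OF ab(2)])
    have Pu: "eval2 P ((y + 1) * u) y = (y + 1) ^ a * eval2 P u v"
      by (subst yv) (rule eval2_hom[OF ab(1)])
    have Quv: "eval2 Q u v \<noteq> 0" using Qu Qu' by (auto simp: u_def)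
    have "ratW P Q u v = ratW P Q x y"
      using U_eq xy y0 Qxy Quv by (auto simp: u_def v_def add.commute)
    hence cross: "eval2 P u v * eval2 Q x y = eval2 P x y * eval2 Q u v"
      using Quv Qxy by (simp add: ratW_def field_simps)
    have "eval2 P ((y + 1) * u) y * eval2 Q x y - (y + 1) ^ N * eval2 P x y * eval2 Q ((y + 1) * u) y
        = (y + 1) ^ a * (eval2 P u v * eval2 Q x y - eval2 P x y * eval2 Q u v)"
      unfolding Pu Qu ab(3) by (simp add: power_add algebra_simps)
    also have "\<dots> = 0" using cross by simp
    finally show ?thesis unfolding evR by (simp add: u_def)
  qed
  define Y :: "complex poly poly" where "Y = [:0, 1:]"
  have Y0: "Y \<noteq> 0" by (rule nz_by_eval[of _ 0 1]) (simp add: Y_def)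
  have Y10: "Y + 1 \<noteq> 0" by (rule nz_by_eval[of _ 0 0]) (simp add: Y_def)
  have YN: "(Y + 1) ^ N - 1 \<noteq> 0"
  proof (rule nz_by_eval[of _ 0 1])
    have "(2::complex) ^ N = of_nat (2 ^ N)" by simp
    moreover have "(2::nat) ^ N \<noteq> 1" using N_pos by simp
    ultimately have "(2::complex) ^ N \<noteq> 1" by (metis of_nat_1 of_nat_eq_iff)
    thus "eval2 ((Y + 1) ^ N - 1) 0 1 \<noteq> 0" by (simp add: Y_def)
  qed
  define Z where "Z = P * Q * Y * (Y + 1) * ((Y + 1) ^ N - 1)"
  have "Z \<noteq> 0" unfolding Z_def using P_nz Q_nz Y0 Y10 YN by simp
  then obtain x0 y0 where "eval2 Z x0 y0 \<noteq> 0" using eval2_nonvanish[of Z UNIV] by auto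
  hence z: "eval2 P x0 y0 \<noteq> 0" "eval2 Q x0 y0 \<noteq> 0" "y0 \<noteq> 0" "y0 + 1 \<noteq> 0" "(y0 + 1) ^ N \<noteq> 1"
    by (auto simp: Z_def Y_def)
  have xt: "(y0 + 1) * (x0 / (y0 + 1)) = x0" using z by simp
  have f: "eval2 P x0 y0 * eval2 Q x0 y0 - (y0 + 1) ^ N * eval2 P x0 y0 * eval2 Q x0 y0
      = eval2 P x0 y0 * eval2 Q x0 y0 * (1 - (y0 + 1) ^ N)" by (simp add: algebra_simps)
  have "eval3 R x0 y0 (x0 / (y0 + 1)) = y0 * (y0 + 1) * eval2 Q x0 y0 * eval2 Q x0 y0 *
      (eval2 P x0 y0 * eval2 Q x0 y0 * (1 - (y0 + 1) ^ N))"
    unfolding evR xt f ..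
  also have "\<dots> \<noteq> 0" using z by simp
  finally have "R \<noteq> 0" by auto
  thus ?thesis unfolding algebraic_on_def using van by blast
qed

end

lemma rat_mult:
  assumes "rational_on D f" "rational_on D g"
  shows "rational_on D (\<lambda>x y. f x y * g x y)"
proof -
  obtain A1 B1 where 1: "B1 \<noteq> 0" "\<forall>(x,y)\<in>D. eval2 B1 x y \<noteq> 0 \<longrightarrow> f x y = eval2 A1 x y / eval2 B1 x y"
    using assms(1) unfolding rational_on_def by blast
  obtain A2 B2 where 2: "B2 \<noteq> 0" "\<forall>(x,y)\<in>D. eval2 B2 x y \<noteq> 0 \<longrightarrow> g x y = eval2 A2 x y / eval2 B2 x y"
    using assms(2) unfolding rational_on_def by blast
  show ?thesis unfolding rational_on_def
  proof (rule exI[of _ "A1 * A2"], rule exI[of _ "B1 * B2"], intro conjI)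
    show "B1 * B2 \<noteq> 0" using 1 2 by simp
    show "\<forall>(x, y)\<in>D. eval2 (B1 * B2) x y \<noteq> 0 \<longrightarrow> f x y * g x y = eval2 (A1 * A2) x y / eval2 (B1 * B2) x y"
    proof clarify
      fix x y assume xy: "(x, y) \<in> D" and nz: "eval2 (B1 * B2) x y \<noteq> 0"
      hence "f x y = eval2 A1 x y / eval2 B1 x y" "g x y = eval2 A2 x y / eval2 B2 x y"
        using 1(2) 2(2) by auto
      thus "f x y * g x y = eval2 (A1 * A2) x y / eval2 (B1 * B2) x y" by simp
    qed
  qed
qed

lemma rat_const1: "rational_on D (\<lambda>x y. 1)"
  unfolding rational_on_def by (rule exI[of _ 1], rule exI[of _ 1]) auto

lemma rat_pow:
  assumes "rational_on D f"
  shows "rational_on D (\<lambda>x y. f x y ^ n)"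
proof (induction n)
  case 0
  then show ?case using rat_const1 by simp
next
  case (Suc n)
  then show ?case using rat_mult[OF assms Suc] by simp
qed

lemma rat_div:
  assumes D: "open D" "D \<noteq> {}" and f: "rational_on D f" and g: "rational_on D g"
    and g0: "\<forall>(x,y)\<in>D. g x y \<noteq> 0"
  shows "rational_on D (\<lambda>x y. f x y / g x y)"
proof -
  obtain A1 B1 where 1: "B1 \<noteq> 0" "\<forall>(x,y)\<in>D. eval2 B1 x y \<noteq> 0 \<longrightarrow> f x y = eval2 A1 x y / eval2 B1 x y"
    using f unfolding rational_on_def by blast
  obtain A2 B2 where 2: "B2 \<noteq> 0" "\<forall>(x,y)\<in>D. eval2 B2 x y \<noteq> 0 \<longrightarrow> g x y = eval2 A2 x y / eval2 B2 x y"
    using g unfolding rational_on_def by blast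
  have A20: "A2 \<noteq> 0"
  proof
    assume A2: "A2 = 0"
    obtain p where "p \<in> D" using D by auto
    then obtain x y where "(x, y) \<in> D" "eval2 B2 x y \<noteq> 0"
      using eval2_nonvanish[OF 2(1) D(1), of "fst p" "snd p"] by auto
    thus False using 2(2) g0 A2 by auto
  qed
  show ?thesis unfolding rational_on_def
  proof (rule exI[of _ "A1 * B2 * B2"], rule exI[of _ "B1 * A2 * B2"], intro conjI)
    show "B1 * A2 * B2 \<noteq> 0" using 1 2 A20 by simp
    show "\<forall>(x, y)\<in>D. eval2 (B1 * A2 * B2) x y \<noteq> 0 \<longrightarrow>
        f x y / g x y = eval2 (A1 * B2 * B2) x y / eval2 (B1 * A2 * B2) x y"
    proof clarify
      fix x y assume xy: "(x, y) \<in> D" and nz: "eval2 (B1 * A2 * B2) x y \<noteq> 0"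
      hence e: "f x y = eval2 A1 x y / eval2 B1 x y" "g x y = eval2 A2 x y / eval2 B2 x y"
        using 1(2) 2(2) by auto
      have "f x y / g x y = (eval2 A1 x y / eval2 B1 x y) / (eval2 A2 x y / eval2 B2 x y)"
        unfolding e ..
      also have "\<dots> = eval2 A1 x y * eval2 B2 x y * eval2 B2 x y / (eval2 B1 x y * eval2 A2 x y * eval2 B2 x y)"
        using nz by (simp add: field_simps)
      finally show "f x y / g x y = eval2 (A1 * B2 * B2) x y / eval2 (B1 * A2 * B2) x y" by simp
    qed
  qed
qed

context prop3
begin

lemma nonrat:
  assumes D: "open D" "D \<noteq> {}"
    and W1: "\<forall>(x,y)\<in>D. W1 x y \<noteq> 0 \<and> W1 x y ^ N = ratW P Q x y \<and> eval2 Q x y \<noteq> 0"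
    and M: "0 < M" "M < N" and rM: "rational_on D (\<lambda>x y. W1 x y ^ M)"
  shows False
proof -
  have rN: "rational_on D (\<lambda>x y. W1 x y ^ N)"
    unfolding rational_on_def using Q_nz W1 by (rule_tac exI[of _ P], rule_tac exI[of _ Q]) (auto simp: ratW_def)
  define g where "g = gcd M N"
  obtain \<alpha> \<beta> where ab: "M * \<alpha> = N * \<beta> + g" using bezout_nat[of M N] M unfolding g_def by auto
  have "rational_on D (\<lambda>x y. (W1 x y ^ M) ^ \<alpha> / (W1 x y ^ N) ^ \<beta>)"
    by (intro rat_div D rat_pow rM rN) (use W1 in auto)
  moreover have "(W1 x y ^ M) ^ \<alpha> / (W1 x y ^ N) ^ \<beta> = W1 x y ^ g" if "(x, y) \<in> D" for x y
  proof -
    have "W1 x y \<noteq> 0" using W1 that by auto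
    moreover have "(W1 x y ^ M) ^ \<alpha> = (W1 x y ^ N) ^ \<beta> * W1 x y ^ g"
      by (simp add: power_mult[symmetric] ab power_add)
    ultimately show ?thesis by simp
  qed
  ultimately have rg: "rational_on D (\<lambda>x y. W1 x y ^ g)"
    unfolding rational_on_def by (smt (verit, best) case_prodD case_prodI2)
  obtain A B where AB: "B \<noteq> 0" "\<forall>(x,y)\<in>D. eval2 B x y \<noteq> 0 \<longrightarrow> W1 x y ^ g = eval2 A x y / eval2 B x y"
    using rg unfolding rational_on_def by blast
  have g0: "g > 0" using M by (simp add: g_def)
  have gM: "g \<le> M" using M by (simp add: g_def)
  have "g dvd N" by (simp add: g_def)
  then obtain m where Nm: "N = g * m" unfolding dvd_def by blast
  have m2: "m \<ge> 2"
  proof (rule ccontr)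
    assume "\<not> m \<ge> 2"
    hence "m = 0 \<or> m = 1" by auto
    thus False
    proof
      assume "m = 0" thus False using Nm M by simp
    next
      assume "m = 1" hence "N = g" using Nm by simp
      thus False using M gM by simp
    qed
  qed
  define Z where "Z = P * B ^ m - A ^ m * Q"
  have "Z * B * Q = 0"
  proof (rule eval2_eq_0_on_open[OF D])
    show "\<forall>(x, y)\<in>D. eval2 (Z * B * Q) x y = 0"
    proof clarify
      fix x y assume xy: "(x, y) \<in> D"
      show "eval2 (Z * B * Q) x y = 0"
      proof (cases "eval2 B x y = 0")
        case False
        have Qxy: "eval2 Q x y \<noteq> 0" using W1 xy by auto
        have "ratW P Q x y = (W1 x y ^ g) ^ m" using W1 xy by (auto simp: Nm power_mult)
        also have "\<dots> = (eval2 A x y / eval2 B x y) ^ m" using AB xy False by auto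
        finally have "eval2 P x y * eval2 B x y ^ m = eval2 A x y ^ m * eval2 Q x y"
          using False Qxy by (simp add: ratW_def field_simps power_divide)
        thus ?thesis by (simp add: Z_def)
      qed simp
    qed
  qed
  hence "Z = 0" using AB(1) Q_nz by simp
  hence eq: "P * B ^ m = A ^ m * Q" by (simp add: Z_def)
  obtain a b where degs': "hom_poly2 a P" "hom_poly2 b Q" "a = b + N" using degs by blast
  have "a = b + m * g" by (simp add: degs'(3) Nm mult.commute)
  from homogenize[OF degs'(1,2) Q_nz this m2 AB(1) eq] have "is_hom_power P Q" .
  thus False using W_not_power by simp
qed

end

definition Epoly :: "complex poly poly \<Rightarrow> complex poly poly \<Rightarrow> complex poly poly" where
  "Epoly P Q = dx2 P * Q - P * dx2 Q"

lemma ratWx_E: "ratWx P Q x y = eval2 (Epoly P Q) x y / (eval2 Q x y) ^ 2"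
  by (simp add: ratWx_def Epoly_def)

lemma notin_nonpos: "norm ((q::complex) - 1) < 1 \<Longrightarrow> q \<notin> \<real>\<^sub>\<le>\<^sub>0"
proof
  assume a: "norm (q - 1) < 1" and "q \<in> \<real>\<^sub>\<le>\<^sub>0"
  hence "Re q \<le> 0" by (simp add: complex_nonpos_Reals_iff)
  moreover have "\<bar>Re (q - 1)\<bar> \<le> norm (q - 1)" by (rule abs_Re_le_cmod)
  ultimately show False using a by simp
qed

lemma vlim: "((\<lambda>z. ((z * y) / (z * y + 1) / z - y) / z) \<longlongrightarrow> - (y ^ 2)) (at (0::complex))"
proof -
  have "((\<lambda>z. - (y ^ 2) / (1 + z * y)) \<longlongrightarrow> - (y ^ 2) / (1 + 0 * y)) (at (0::complex))"
    by (intro tendsto_intros) auto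
  hence l: "((\<lambda>z. - (y ^ 2) / (1 + z * y)) \<longlongrightarrow> - (y ^ 2)) (at (0::complex))" by simp
  have e1: "eventually (\<lambda>z. 1 + z * y \<noteq> 0) (at (0::complex))"
  proof -
    have "((\<lambda>z. 1 + z * y) \<longlongrightarrow> 1 + 0 * y) (at (0::complex))" by (intro tendsto_intros)
    thus ?thesis using tendsto_imp_eventually_ne[of "\<lambda>z. 1 + z * y" 1 "at (0::complex)" 0] by simp
  qed
  have e4: "eventually (\<lambda>z. z \<noteq> 0) (at (0::complex))" by (simp add: eventually_at_filter)
  have "eventually (\<lambda>z. - (y ^ 2) / (1 + z * y) = ((z * y) / (z * y + 1) / z - y) / z) (at (0::complex))"
    using e1 e4
  proof eventually_elim
    case (elim z)
    hence z0: "z \<noteq> 0" by simp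
    have "(z * y) / (z * y + 1) / z = y / (1 + z * y)" using z0 by (simp add: add.commute)
    moreover have "(y / (1 + z * y) - y) / z = - (y ^ 2) / (1 + z * y)"
    proof -
      have "y / (1 + z * y) - y = (y - y * (1 + z * y)) / (1 + z * y)"
        using elim by (simp add: diff_divide_distrib)
      also have "y - y * (1 + z * y) = z * (- (y ^ 2))" by (simp add: algebra_simps power2_eq_square)
      finally have "(y / (1 + z * y) - y) / z = z * (- (y ^ 2)) / (1 + z * y) / z" by simp
      also have "\<dots> = - (y ^ 2) / (1 + z * y)" using z0 by simp
      finally show ?thesis .
    qed
    ultimately show ?case by simp
  qed
  thus ?thesis using Lim_transform_eventually[OF l] by simp
qed

lemma vlim0: "((\<lambda>z. (z * y) / (z * y + 1) / z) \<longlongrightarrow> y) (at (0::complex))"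
proof -
  have "((\<lambda>z. y / (1 + z * y)) \<longlongrightarrow> y / (1 + 0 * y)) (at (0::complex))"
    by (intro tendsto_intros) auto
  hence l: "((\<lambda>z. y / (1 + z * y)) \<longlongrightarrow> y) (at (0::complex))" by simp
  have "eventually (\<lambda>z. y / (1 + z * y) = (z * y) / (z * y + 1) / z) (at (0::complex))"
    unfolding eventually_at_filter by (intro always_eventually) (simp add: add.commute)
  thus ?thesis using Lim_transform_eventually[OF l] by simp
qed

context prop3
begin

lemma eq_ev:
  assumes D0: "(x, y) \<in> D0" and Q0: "eval2 Q x y \<noteq> 0"
  shows "eventually (\<lambda>z. ratW P Q (U (z * x) (z * y) / z * (1 + z * y)) y = (1 + z * y) ^ N * ratW P Q x y) (at 0)"
proof -
  define s where "s z = U (z * x) (z * y) / z * (1 + z * y)" for z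
  have sl: "(s \<longlongrightarrow> x) (at 0)" unfolding s_def using s_lim[OF D0] .
  have yl: "((\<lambda>z. 1 + z * y) \<longlongrightarrow> 1) (at 0)"
  proof -
    have "((\<lambda>z. 1 + z * y) \<longlongrightarrow> 1 + 0 * y) (at 0)" by (intro tendsto_intros)
    thus ?thesis by simp
  qed
  have e1: "eventually (\<lambda>z. eval2 Q (s z) y \<noteq> 0) (at 0)"
    using tendsto_imp_eventually_ne[OF eval2_tendsto1[OF sl] Q0] .
  have e2: "eventually (\<lambda>z. 1 + z * y \<noteq> 0) (at 0)"
    using tendsto_imp_eventually_ne[OF yl] by simp
  have e3: "eventually (\<lambda>z. norm z < rc) (at (0::complex))" using ev_norm_less[OF rc(1)] .
  have e4: "eventually (\<lambda>z. z \<noteq> 0) (at (0::complex))" by (simp add: eventually_at_filter)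
  show ?thesis
    using e1 e2 e3 e4
  proof eventually_elim
    case (elim z)
    show ?case by (rule key) (use elim rc(2)[OF D0] Q0 in \<open>auto simp: s_def\<close>)
  qed
qed

lemma E_nz: "Epoly P Q \<noteq> 0"
proof
  assume E0: "Epoly P Q = 0"
  have "P * Q * [:0, 1:] \<noteq> 0" using P_nz Q_nz by simp
  moreover obtain p where "p \<in> D0" using D0_ne by auto
  ultimately obtain x0 y0 where xy0: "(x0, y0) \<in> D0" "eval2 (P * Q * [:0, 1:]) x0 y0 \<noteq> 0"
    using eval2_nonvanish[of "P * Q * [:0, 1:]" D0 "fst p" "snd p"] D0_open by auto
  hence nz: "eval2 P x0 y0 \<noteq> 0" "eval2 Q x0 y0 \<noteq> 0" "y0 \<noteq> 0" by auto
  define h where "h v = ratW P Q v y0" for v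
  define SQ where "SQ = (\<lambda>v. eval2 Q v y0) -` (- {0})"
  have oSQ: "open SQ" unfolding SQ_def
    by (intro continuous_open_vimage) (auto intro: eval2_isCont1)
  have xSQ: "x0 \<in> SQ" using nz(2) by (simp add: SQ_def)
  obtain \<rho> where \<rho>: "\<rho> > 0" "ball x0 \<rho> \<subseteq> SQ"
    using oSQ xSQ open_contains_ball by blast
  have "\<exists>c. \<forall>v\<in>ball x0 \<rho>. h v = c"
  proof (rule has_field_derivative_zero_constant[OF convex_ball])
    fix v assume "v \<in> ball x0 \<rho>"
    hence Qv: "eval2 Q v y0 \<noteq> 0" using \<rho> by (auto simp: SQ_def)
    have "ratWx P Q v y0 = 0" by (simp add: ratWx_E E0)
    thus "(h has_field_derivative 0) (at v within ball x0 \<rho>)"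
      using ratW_deriv[OF Qv] unfolding h_def by (metis has_field_derivative_at_within)
  qed
  then obtain c where c: "\<forall>v\<in>ball x0 \<rho>. h v = c" by blast
  hence hc: "\<forall>v\<in>ball x0 \<rho>. h v = h x0" using \<rho>(1) by simp
  have hx0: "h x0 \<noteq> 0" using nz by (simp add: h_def ratW_def)
  define s where "s t = U (t * x0) (t * y0) / t * (1 + t * y0)" for t
  have "eventually (\<lambda>t. s t \<in> ball x0 \<rho>) (at 0)"
    using s_lim[OF xy0(1)] \<rho>(1) unfolding s_def by (intro topological_tendstoD) auto
  hence "eventually (\<lambda>t. ((1 + t * y0) ^ N - 1) / t = 0) (at 0)"
    using eq_ev[OF xy0(1) nz(2)]
  proof eventually_elim
    case (elim t)
    hence "(1 + t * y0) ^ N * h x0 = h x0" using hc by (simp add: h_def s_def)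
    hence "((1 + t * y0) ^ N - 1) * h x0 = 0" by (simp add: algebra_simps)
    thus ?case using hx0 by simp
  qed
  hence "((\<lambda>t. ((1 + t * y0) ^ N - 1) / t) \<longlongrightarrow> 0) (at 0)" by (rule tendsto_eventually)
  from tendsto_unique[OF at_neq_bot pow_quot_lim this] have "of_nat N * y0 = 0" .
  thus False using N_pos nz(3) by simp
qed

end

context prop3
begin

lemma Qdiv: "y \<noteq> 0 \<Longrightarrow> eval2 Q (x / y) 1 = (1 / y) ^ bQ * eval2 Q x y"
  using Qh[of "1 / y" x y] by simp

lemma Wdiv: "y \<noteq> 0 \<Longrightarrow> ratW P Q (x / y) 1 = (1 / y) ^ N * ratW P Q x y"
  using Wh[of "1 / y" x y] by simp

lemma main:
  shows "algebraic_on S U \<and> algebraic_on S (\<lambda>x y. y / (y + 1)) \<and>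
    (\<exists>D. connected D \<and> D \<subseteq> D0 \<and>
       projective_flow_on D U (\<lambda>x y. y / (y + 1)) \<and>
       (\<forall>(x, y)\<in>D. eval2 Q x y \<noteq> 0 \<and> ratWx P Q x y \<noteq> 0 \<and>
          ((\<lambda>z. (U (z * x) (z * y) / z - x) / z)
             \<longlongrightarrow> of_nat N * y * ratW P Q x y / ratWx P Q x y - x * y) (at 0) \<and>
          ((\<lambda>z. ((z * y) / (z * y + 1) / z - y) / z) \<longlongrightarrow> - (y ^ 2)) (at 0)) \<and>
       level_on D U (\<lambda>x y. y / (y + 1)) N)"
proof -
  define G where "G = [:0, 1:] * P * Q * Epoly P Q"
  have G0: "G \<noteq> 0" using P_nz Q_nz E_nz by (simp add: G_def)
  obtain p where "p \<in> D0" using D0_ne by auto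
  then obtain x0 y0 where xy0: "(x0, y0) \<in> D0" "eval2 G x0 y0 \<noteq> 0"
    using eval2_nonvanish[OF G0 D0_open, of "fst p" "snd p"] by auto
  hence nz0: "y0 \<noteq> 0" "eval2 Q x0 y0 \<noteq> 0" "eval2 P x0 y0 \<noteq> 0" by (auto simp: G_def)
  define Og where "Og = D0 \<inter> (\<lambda>p. eval2 G (fst p) (snd p)) -` (- {0})"
  have oO: "open Og" unfolding Og_def
    by (intro open_Int D0_open continuous_open_vimage) (auto intro: eval2_isCont)
  have "(x0, y0) \<in> Og" using xy0 by (simp add: Og_def)
  then obtain \<epsilon>1 where \<epsilon>1: "\<epsilon>1 > 0" "ball (x0, y0) \<epsilon>1 \<subseteq> Og" using oO open_contains_ball by blast
  define W0 where "W0 = ratW P Q (x0 / y0) 1"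
  have W0nz: "W0 \<noteq> 0" unfolding W0_def Wdiv[OF nz0(1)] using nz0 by (simp add: ratW_def)
  define F where "F p = ratW P Q (fst p / snd p) 1" for p :: "complex \<times> complex"
  have c1: "isCont (\<lambda>p. (fst p / snd p, 1 :: complex)) (x0, y0)" using nz0(1) by (intro continuous_intros) auto
  have c2: "isCont (\<lambda>z. ratW P Q (fst z) (snd z)) (x0 / y0, 1)"
    by (rule ratW_cont) (use nz0 in \<open>simp add: Qdiv\<close>)
  have "isCont F (x0, y0)" unfolding F_def using isCont_o2[OF c1, of "\<lambda>z. ratW P Q (fst z) (snd z)"] c2 by simp
  then obtain \<epsilon>3 where \<epsilon>3: "\<epsilon>3 > 0" "\<And>p. dist p (x0, y0) < \<epsilon>3 \<Longrightarrow> dist (F p) (F (x0, y0)) < norm W0"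
    using W0nz unfolding continuous_at_eps_delta by (meson zero_less_norm_iff)
  define D where "D = ball (x0, y0) (min \<epsilon>1 \<epsilon>3)"
  have x0D: "(x0, y0) \<in> D" using \<epsilon>1 \<epsilon>3 by (simp add: D_def)
  have oD: "open D" by (simp add: D_def)
  have Dp: "(x, y) \<in> D0 \<and> y \<noteq> 0 \<and> eval2 P x y \<noteq> 0 \<and> eval2 Q x y \<noteq> 0 \<and> eval2 (Epoly P Q) x y \<noteq> 0 \<and>
      norm (ratW P Q (x / y) 1 / W0 - 1) < 1" if xy: "(x, y) \<in> D" for x y
  proof -
    have "(x, y) \<in> Og" using xy \<epsilon>1 by (auto simp: D_def dist_commute)
    hence a: "(x, y) \<in> D0 \<and> y \<noteq> 0 \<and> eval2 P x y \<noteq> 0 \<and> eval2 Q x y \<noteq> 0 \<and> eval2 (Epoly P Q) x y \<noteq> 0"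
      by (auto simp: Og_def G_def)
    have "dist (F (x, y)) W0 < norm W0" using \<epsilon>3(2)[of "(x, y)"] xy
      by (auto simp: D_def dist_commute F_def W0_def)
    hence "norm ((ratW P Q (x / y) 1 - W0) / W0) < 1" using W0nz
      by (simp add: F_def dist_norm norm_divide divide_less_eq)
    hence "norm (ratW P Q (x / y) 1 / W0 - 1) < 1" using W0nz by (simp add: diff_divide_distrib)
    thus ?thesis using a by blast
  qed
  have Wx0: "ratWx P Q x y \<noteq> 0" if "(x, y) \<in> D" for x y using Dp[OF that] by (simp add: ratWx_E)
  have W0': "ratW P Q x y \<noteq> 0" if "(x, y) \<in> D" for x y using Dp[OF that] by (simp add: ratW_def)
  define L where "L x y = of_nat N * y * ratW P Q x y / ratWx P Q x y - x * y" for x y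
  have vf1e: "vf1 U x y = L x y" if "(x, y) \<in> D" for x y
    unfolding vf1_def L_def using Dp[OF that] Wx0[OF that]
    by (intro tendsto_Lim[OF trivial_limit_at] vf_lim) auto
  have vf2e: "vf2 (\<lambda>x y. y / (y + 1)) x y = - (y ^ 2)" for x y
    unfolding vf2_def by (intro tendsto_Lim[OF trivial_limit_at] vlim)
  define c where "c = exp (Ln W0 / of_nat N)"
  define W1 where "W1 x y = y * (c * exp (Ln (ratW P Q (x / y) 1 / W0) / of_nat N))" for x y
  have expN: "exp (a / of_nat N) ^ N = exp a" for a :: complex
    using N_pos by (simp add: exp_of_nat_mult[symmetric])
  have W1N: "W1 x y ^ N = ratW P Q x y" if "(x, y) \<in> D" for x y
  proof -
    have q0: "ratW P Q (x / y) 1 / W0 \<noteq> 0" using Dp[OF that] W0nz W0'[OF that] by (simp add: Wdiv)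
    have "W1 x y ^ N = y ^ N * (c ^ N * exp (Ln (ratW P Q (x / y) 1 / W0) / of_nat N) ^ N)"
      by (simp add: W1_def power_mult_distrib)
    also have "\<dots> = y ^ N * (W0 * (ratW P Q (x / y) 1 / W0))"
      unfolding c_def expN using W0nz q0 by simp
    also have "\<dots> = ratW P Q x y" using W0nz Dp[OF that] by (simp add: Wdiv power_one_over)
    finally show ?thesis .
  qed
  have W1nz: "W1 x y \<noteq> 0" if "(x, y) \<in> D" for x y using Dp[OF that] by (simp add: W1_def c_def)
  have W1hom: "\<forall>\<^sub>F t in nhds 1. W1 (t * x) (t * y) = t * W1 x y" for x y
  proof -
    have e: "eventually (\<lambda>t::complex. t \<noteq> 0) (nhds 1)" by (rule t1_space_nhds) simp
    thus ?thesis
  proof eventually_elim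
    case (elim t)
    hence "(t * x) / (t * y) = x / y" by simp
    thus ?case by (simp add: W1_def)
  qed
  qed
  have W1pde: "\<exists>d. ((\<lambda>t. W1 t y) has_field_derivative d) (at x) \<and>
      W1 x y * vf2 (\<lambda>x y. y / (y + 1)) x y + d * (y * vf1 U x y - x * vf2 (\<lambda>x y. y / (y + 1)) x y) = 0"
    if xy: "(x, y) \<in> D" for x y
  proof -
    note dp = Dp[OF xy]
    have y0: "y \<noteq> 0" using dp by simp
    have Qr: "eval2 Q (x / y) 1 \<noteq> 0" using dp by (simp add: Qdiv)
    have nn: "ratW P Q (x / y) 1 / W0 \<notin> \<real>\<^sub>\<le>\<^sub>0" using dp by (intro notin_nonpos) simp
    have a: "((\<lambda>t. t / y) has_field_derivative 1 / y) (at x)"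
      using DERIV_cdivide[OF DERIV_ident, of y] by simp
    have b: "((\<lambda>t. ratW P Q (t / y) 1) has_field_derivative ratWx P Q (x / y) 1 * (1 / y)) (at x)"
      using DERIV_chain2[OF ratW_deriv[OF Qr] a] by simp
    have c': "((\<lambda>t. ratW P Q (t / y) 1 / W0) has_field_derivative ratWx P Q (x / y) 1 * (1 / y) / W0) (at x)"
      by (rule DERIV_cdivide[OF b])
    have d': "((\<lambda>t. Ln (ratW P Q (t / y) 1 / W0)) has_field_derivative
        inverse (ratW P Q (x / y) 1 / W0) * (ratWx P Q (x / y) 1 * (1 / y) / W0)) (at x)"
      using DERIV_chain2[OF has_field_derivative_Ln[OF nn] c'] by simp
    have e': "((\<lambda>t. Ln (ratW P Q (t / y) 1 / W0) / of_nat N) has_field_derivative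
        inverse (ratW P Q (x / y) 1 / W0) * (ratWx P Q (x / y) 1 * (1 / y) / W0) / of_nat N) (at x)"
      by (rule DERIV_cdivide[OF d'])
    have f': "((\<lambda>t. exp (Ln (ratW P Q (t / y) 1 / W0) / of_nat N)) has_field_derivative
        exp (Ln (ratW P Q (x / y) 1 / W0) / of_nat N) *
        (inverse (ratW P Q (x / y) 1 / W0) * (ratWx P Q (x / y) 1 * (1 / y) / W0) / of_nat N)) (at x)"
      using DERIV_chain2[OF DERIV_exp e'] by simp
    obtain d where dd: "((\<lambda>t. W1 t y) has_field_derivative d) (at x)"
      using DERIV_cmult[OF DERIV_cmult[OF f', of c], of y] unfolding W1_def by blast
    define O' where "O' = (\<lambda>t. (t, y)) -` D"
    have oO': "open O'" unfolding O'_def using oD by (intro continuous_open_vimage) (auto intro: continuous_intros)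
    have xO': "x \<in> O'" using xy by (simp add: O'_def)
    have "((\<lambda>t. W1 t y ^ N) has_field_derivative of_nat N * (d * W1 x y ^ (N - Suc 0))) (at x)"
      by (rule DERIV_power[OF dd])
    hence "((\<lambda>t. ratW P Q t y) has_field_derivative of_nat N * (d * W1 x y ^ (N - Suc 0))) (at x)"
      by (rule has_field_derivative_transform_within_open[OF _ oO' xO']) (simp add: O'_def W1N)
    hence WxE: "ratWx P Q x y = of_nat N * (d * W1 x y ^ (N - Suc 0))"
      using DERIV_unique ratW_deriv dp by blast
    have WE: "ratW P Q x y = W1 x y * W1 x y ^ (N - Suc 0)"
      using W1N[OF xy] N_pos by (metis Suc_pred power_Suc)
    have d0: "d \<noteq> 0" using WxE Wx0[OF xy] by auto
    have K0: "W1 x y ^ (N - Suc 0) \<noteq> 0" using W1nz[OF xy] by simp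
    have N0: "(of_nat N :: complex) \<noteq> 0" using N_pos by simp
    have "W1 x y * vf2 (\<lambda>x y. y / (y + 1)) x y + d * (y * vf1 U x y - x * vf2 (\<lambda>x y. y / (y + 1)) x y) = 0"
      unfolding vf1e[OF xy] vf2e L_def WxE WE using d0 K0 N0
      by (simp add: field_simps power2_eq_square)
    thus ?thesis using dd by blast
  qed

  have pf: "projective_flow_on D U (\<lambda>x y. y / (y + 1))"
    unfolding projective_flow_on_def
  proof (intro conjI oD ballI)
    show "D \<noteq> {}" using x0D by auto
  next
    fix p assume "p \<in> D"
    then obtain x y where p: "p = (x, y)" "(x, y) \<in> D" by (cases p) auto
    note dp = Dp[OF p(2)]
    show "case p of (x, y) \<Rightarrow>
        ((\<lambda>z. U (z * x) (z * y) / z) \<longlongrightarrow> x) (at 0) \<and>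
        ((\<lambda>z. z * y / (z * y + 1) / z) \<longlongrightarrow> y) (at 0) \<and>
        (\<forall>\<^sub>F (z, w) in at (0, 0). z \<noteq> 0 \<and> w \<noteq> 0 \<and> z + w \<noteq> 0 \<longrightarrow>
           fpow U (\<lambda>x y. y / (y + 1)) w (fpow U (\<lambda>x y. y / (y + 1)) z (x, y)) =
           fpow U (\<lambda>x y. y / (y + 1)) (z + w) (x, y))"
      unfolding p(1) using U_bdry dp vlim0 flow_ev[of x y] Wx0[OF p(2)] by auto
  qed
  have lv: "level_on D U (\<lambda>x y. y / (y + 1)) N"
    unfolding level_on_def
  proof (intro conjI N_pos ballI exI[of _ W1])
    fix p assume "p \<in> D"
    then obtain x y where p: "p = (x, y)" "(x, y) \<in> D" by (cases p) auto
    have "x * vf2 (\<lambda>x y. y / (y + 1)) x y - y * vf1 U x y = - (of_nat N * y ^ 2 * ratW P Q x y / ratWx P Q x y)"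
      unfolding vf1e[OF p(2)] vf2e L_def by (simp add: algebra_simps power2_eq_square)
    also have "\<dots> \<noteq> 0" using Dp[OF p(2)] W0'[OF p(2)] Wx0[OF p(2)] N_pos by simp
    finally show "case p of (x, y) \<Rightarrow> x * vf2 (\<lambda>x y. y / (y + 1)) x y - y * vf1 U x y \<noteq> 0"
      using p(1) by simp
  next
    show "level_solution D (vf1 U) (vf2 (\<lambda>x y. y / (y + 1))) W1"
      unfolding level_solution_def using W1nz W1pde W1hom by blast
  next
    show "rational_on D (\<lambda>x y. W1 x y ^ N)"
      unfolding rational_on_def
      by (rule exI[of _ P], rule exI[of _ Q]) (use Q_nz W1N in \<open>auto simp: ratW_def\<close>)
  next
    show "\<forall>M. 0 < M \<and> M < N \<longrightarrow> \<not> rational_on D (\<lambda>x y. W1 x y ^ M)"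
    proof (intro allI impI notI)
      fix M assume "0 < M \<and> M < N" "rational_on D (\<lambda>x y. W1 x y ^ M)"
      thus False using nonrat[OF oD _ _ _ _, of W1 M] x0D W1nz W1N Dp by blast
    qed
  qed
  have pts: "\<forall>(x, y)\<in>D. eval2 Q x y \<noteq> 0 \<and> ratWx P Q x y \<noteq> 0 \<and>
          ((\<lambda>z. (U (z * x) (z * y) / z - x) / z)
             \<longlongrightarrow> of_nat N * y * ratW P Q x y / ratWx P Q x y - x * y) (at 0) \<and>
          ((\<lambda>z. ((z * y) / (z * y + 1) / z - y) / z) \<longlongrightarrow> - (y ^ 2)) (at 0)"
    using Dp Wx0 vf_lim vlim by auto
  have sub: "D \<subseteq> D0" using Dp by auto
  show ?thesis using alg_U alg_v pf lv pts sub connected_ball unfolding D_def by blast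
qed

end

theorem proposition3:
  fixes N :: nat and P Q :: "complex poly poly"
    and U :: "complex \<Rightarrow> complex \<Rightarrow> complex"
    and S D0 :: "(complex \<times> complex) set"
  assumes N_pos: "N > 0"
    and W_hom: "hom_rat_fun (int N) P Q"
    and W_not_power: "\<not> is_hom_power P Q"
    and S_open: "open S"
    and U_cont: "continuous_on S (\<lambda>(x, y). U x y)"
    and U_eq: "\<forall>(x, y)\<in>S. y + 1 \<noteq> 0 \<and> eval2 Q x y \<noteq> 0 \<and> eval2 Q (U x y) (y / (y + 1)) \<noteq> 0
                 \<longrightarrow> ratW P Q (U x y) (y / (y + 1)) = ratW P Q x y"
    and D0_open: "open D0" and D0_ne: "D0 \<noteq> {}"
    and cone: "\<exists>r>0. \<forall>(x, y)\<in>D0. \<forall>z. z \<noteq> 0 \<and> norm z < r \<longrightarrow> (z * x, z * y) \<in> S"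
    and U_bdry: "\<forall>(x, y)\<in>D0. ((\<lambda>z. U (z * x) (z * y) / z) \<longlongrightarrow> x) (at 0)"
  shows "algebraic_on S U \<and> algebraic_on S (\<lambda>x y. y / (y + 1)) \<and>
    (\<exists>D. connected D \<and> D \<subseteq> D0 \<and>
       projective_flow_on D U (\<lambda>x y. y / (y + 1)) \<and>
       (\<forall>(x, y)\<in>D. eval2 Q x y \<noteq> 0 \<and> ratWx P Q x y \<noteq> 0 \<and>
          ((\<lambda>z. (U (z * x) (z * y) / z - x) / z)
             \<longlongrightarrow> of_nat N * y * ratW P Q x y / ratWx P Q x y - x * y) (at 0) \<and>
          ((\<lambda>z. ((z * y) / (z * y + 1) / z - y) / z) \<longlongrightarrow> - (y ^ 2)) (at 0)) \<and>
       level_on D U (\<lambda>x y. y / (y + 1)) N)"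
proof -
  have "prop3 N P Q U S D0" unfolding prop3_def using assms by blast
  thus ?thesis by (rule prop3.main)
qed

end
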